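(* Let $a\in(1,\infty)$ and $\gamma\in\mathbb C^{\mathbb Z}$ bounded with $q_2(\gamma)<\infty$. Then $D_\gamma\in C^2(A_a)$.
   Context: On $\ell^2(\mathbb Z)$: $Te_k=e_{k+1}$, $Xe_k=ke_k$, $D_\gamma e_k=\gamma_ke_k$. $(S\gamma)_k=\gamma_{k+1}$, $(\Delta\gamma)_k=\gamma_k-\gamma_{k+1}$; $q_0(\gamma)=\sup|\gamma_k|$, $q_{n+1}(\gamma)=q_n(\gamma)+\sup_k|k^{n+1}(\Delta^{n+1}\gamma)_k|$. $A_a$ is the self-adjoint closure on $\mathcal D(X)$ of $\frac12\sum_{m\ne0}a^{-|m|}(T^mX+XT^m)$. $B\in C^1(A)$ if $|\langle A\varphi,B\psi\rangle-\langle\varphi,BA\psi\rangle|\le C\|\varphi\|\|\psi\|$ on $\mathcal D(A)$, with $\mathrm{ad}_AB$ the associated bounded operator; $B\in C^2(A)$ if $B\in C^1(A)$ and $\mathrm{ad}_AB\in C^1(A)$. *)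

theory Defs
  imports "HOL-Analysis.Analysis"
begin

text \<open>Vectors of l2(Z) are modelled as functions int => complex that are square summable.
  The basis vector e_k is the indicator of k.\<close>

type_synonym vec = "int \<Rightarrow> complex"
type_synonym op = "vec \<Rightarrow> vec"

definition l2 :: "vec \<Rightarrow> bool" where
  "l2 f \<longleftrightarrow> (\<lambda>k. (cmod (f k))\<^sup>2) summable_on UNIV"

definition l2inner :: "vec \<Rightarrow> vec \<Rightarrow> complex" where
  "l2inner f g = infsum (\<lambda>k. cnj (f k) * g k) UNIV"

definition l2norm :: "vec \<Rightarrow> real" where
  "l2norm f = sqrt (infsum (\<lambda>k. (cmod (f k))\<^sup>2) UNIV)"

definition bounded_op :: "op \<Rightarrow> bool" where
  "bounded_op B \<longleftrightarrow>
     (\<forall>f. l2 f \<longrightarrow> l2 (B f)) \<and>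
     (\<forall>f g c. l2 f \<longrightarrow> l2 g \<longrightarrow> B (\<lambda>k. f k + c * g k) = (\<lambda>k. B f k + c * B g k)) \<and>
     (\<exists>C. \<forall>f. l2 f \<longrightarrow> l2norm (B f) \<le> C * l2norm f)"

text \<open>T e_k = e_(k+1), hence (T^m f)_k = f_(k-m) for all m in Z; X e_k = k e_k;
  D_gamma e_k = gamma_k e_k.\<close>
definition Tpow :: "int \<Rightarrow> op" where
  "Tpow m f = (\<lambda>k. f (k - m))"

definition Xop :: op where
  "Xop f = (\<lambda>k. of_int k * f k)"

definition Dop :: "vec \<Rightarrow> op" where
  "Dop \<gamma> f = (\<lambda>k. \<gamma> k * f k)"

definition domX :: "vec set" where
  "domX = {f. l2 f \<and> l2 (Xop f)}"

definition A0 :: "real \<Rightarrow> op" where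
  "A0 a f = (\<lambda>k. (1/2) * infsum (\<lambda>m. complex_of_real (a powr (- real_of_int \<bar>m\<bar>)) *
                 (Tpow m (Xop f) k + Xop (Tpow m f) k)) {m. m \<noteq> 0})"

text \<open>Graph of the closure A_a of A0 a restricted to D(X): closure in l2 x l2 of its graph.\<close>
definition graphA :: "real \<Rightarrow> (vec \<times> vec) set" where
  "graphA a = {(f, g). l2 f \<and> l2 g \<and>
     (\<exists>\<phi>. (\<forall>n. \<phi> n \<in> domX) \<and>
          (\<lambda>n. l2norm (\<lambda>k. \<phi> n k - f k)) \<longlonglongrightarrow> 0 \<and>
          (\<lambda>n. l2norm (\<lambda>k. A0 a (\<phi> n) k - g k)) \<longlonglongrightarrow> 0)}"

definition domA :: "real \<Rightarrow> vec set" where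
  "domA a = {f. \<exists>g. (f, g) \<in> graphA a}"

definition Aop :: "real \<Rightarrow> op" where
  "Aop a f = (THE g. (f, g) \<in> graphA a)"

definition C1 :: "op \<Rightarrow> vec set \<Rightarrow> op \<Rightarrow> bool" where
  "C1 A D B \<longleftrightarrow> bounded_op B \<and>
     (\<exists>C. \<forall>\<phi>\<in>D. \<forall>\<psi>\<in>D.
        cmod (l2inner (A \<phi>) (B \<psi>) - l2inner \<phi> (B (A \<psi>))) \<le> C * l2norm \<phi> * l2norm \<psi>)"

text \<open>ad_A B is the (unique, as D is dense) bounded operator K with
  <phi, K psi> = <A phi, B psi> - <phi, B A psi> on D.\<close>
definition is_adA :: "op \<Rightarrow> vec set \<Rightarrow> op \<Rightarrow> op \<Rightarrow> bool" where
  "is_adA A D B K \<longleftrightarrow> bounded_op K \<and>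
     (\<forall>\<phi>\<in>D. \<forall>\<psi>\<in>D. l2inner \<phi> (K \<psi>) = l2inner (A \<phi>) (B \<psi>) - l2inner \<phi> (B (A \<psi>)))"

definition C2 :: "op \<Rightarrow> vec set \<Rightarrow> op \<Rightarrow> bool" where
  "C2 A D B \<longleftrightarrow> C1 A D B \<and> (\<exists>K. is_adA A D B K \<and> C1 A D K)"

definition Delta :: "vec \<Rightarrow> vec" where
  "Delta \<gamma> = (\<lambda>k. \<gamma> k - \<gamma> (k + 1))"

fun q :: "nat \<Rightarrow> vec \<Rightarrow> ereal" where
  "q 0 \<gamma> = (SUP k. ereal (cmod (\<gamma> k)))"
| "q (Suc n) \<gamma> = q n \<gamma> + (SUP k. ereal (cmod (of_int k ^ Suc n * (Delta ^^ Suc n) \<gamma> k)))"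

end

theory Submission imports Defs begin

lemma amgm_opt:
  fixes X A B :: real
  assumes A: "A \<ge> 0" and B: "B \<ge> 0" and H: "\<And>t. t > 0 \<Longrightarrow> X \<le> (t/2) * A + (1/(2*t)) * B"
  shows "X \<le> sqrt A * sqrt B"
proof (cases "A = 0 \<or> B = 0")
  case True
  show ?thesis
  proof (rule ccontr)
    assume "\<not> ?thesis"
    hence X: "X > 0" using True by auto
    show False
    proof (cases "A = 0")
      case A0: True
      show False
      proof (cases "B = 0")
        case True thus False using H[of 1] A0 X by simp
      next
        case False
        hence Bp: "B > 0" using B by simp
        hence t: "B / X > 0" using X by simp
        have "(1/(2*(B/X))) * B = X / 2" using Bp X by (simp add: field_simps)
        hence "X \<le> X / 2" using H[OF t] A0 by simp
        thus False using X by simp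
      qed
    next
      case False
      hence B0: "B = 0" and Ap: "A > 0" using True A by auto
      hence t: "X / A > 0" using X by simp
      have "((X/A)/2) * A = X / 2" using Ap by simp
      hence "X \<le> X / 2" using H[OF t] B0 by simp
      thus False using X by simp
    qed
  qed
next
  case False
  hence Ap: "A > 0" and Bp: "B > 0" using A B by auto
  define t where "t = sqrt B / sqrt A"
  have sA: "sqrt A > 0" and sB: "sqrt B > 0" using Ap Bp by auto
  have t: "t > 0" using sA sB by (simp add: t_def)
  have eA: "A = sqrt A * sqrt A" and eB: "B = sqrt B * sqrt B" using Ap Bp by simp_all
  have "t * A = sqrt A * sqrt B" unfolding t_def using sA
    by (subst eA) (simp add: field_simps)
  moreover have "B / t = sqrt A * sqrt B" unfolding t_def using sA sB
    by (subst eB) (simp add: field_simps)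
  ultimately have "(t/2) * A + (1/(2*t)) * B = sqrt A * sqrt B" by (simp add: field_simps)
  thus ?thesis using H[OF t] by simp
qed

lemma amgm_pt:
  fixes x y t :: real
  assumes "t > 0"
  shows "x * y \<le> (t/2) * x^2 + (1/(2*t)) * y^2"
proof -
  have "0 \<le> (t * x - y)^2 / (2*t)" using assms by simp
  also have "(t * x - y)^2 / (2*t) = (t/2) * x^2 - x * y + (1/(2*t)) * y^2"
    using assms by (simp add: power2_eq_square field_simps)
  finally show ?thesis by simp
qed

lemma l2_sum: "l2 f \<Longrightarrow> (\<lambda>k. (cmod (f k))\<^sup>2) summable_on UNIV"
  by (simp add: l2_def)

lemma l2norm_nonneg: "l2norm f \<ge> 0"
  unfolding l2norm_def by (simp add: infsum_nonneg)

lemma l2norm_sq: "(l2norm f)^2 = infsum (\<lambda>k. (cmod (f k))\<^sup>2) UNIV"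
  unfolding l2norm_def by (simp add: infsum_nonneg)

lemma l2_dom:
  assumes "l2 g" "\<And>k. cmod (f k) \<le> cmod (g k)"
  shows "l2 f"
  unfolding l2_def
  by (rule summable_on_comparison_test[OF l2_sum[OF assms(1)]])
     (auto intro: power_mono assms(2))

lemma l2norm_mono:
  assumes "l2 g" "\<And>k. cmod (f k) \<le> cmod (g k)"
  shows "l2norm f \<le> l2norm g"
proof -
  have "l2 f" using l2_dom assms .
  hence "infsum (\<lambda>k. (cmod (f k))\<^sup>2) UNIV \<le> infsum (\<lambda>k. (cmod (g k))\<^sup>2) UNIV"
    by (intro infsum_mono l2_sum assms power_mono) auto
  thus ?thesis unfolding l2norm_def by simp
qed

lemma l2_add: assumes "l2 f" "l2 g" shows "l2 (\<lambda>k. f k + g k)"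
  unfolding l2_def
proof (rule summable_on_comparison_test)
  show "(\<lambda>k. 2 * (cmod (f k))\<^sup>2 + 2 * (cmod (g k))\<^sup>2) summable_on UNIV"
    using l2_sum[OF assms(1)] l2_sum[OF assms(2)]
    by (intro summable_on_add summable_on_cmult_right) auto
  fix k
  have "cmod (f k + g k) \<le> cmod (f k) + cmod (g k)" by (rule norm_triangle_ineq)
  hence "(cmod (f k + g k))\<^sup>2 \<le> (cmod (f k) + cmod (g k))\<^sup>2" by (intro power_mono) auto
  also have "\<dots> \<le> 2 * (cmod (f k))\<^sup>2 + 2 * (cmod (g k))\<^sup>2"
  proof -
    have "0 \<le> (cmod (f k) - cmod (g k))^2" by simp
    moreover have "2 * (cmod (f k))\<^sup>2 + 2 * (cmod (g k))\<^sup>2 - (cmod (f k) + cmod (g k))\<^sup>2 = (cmod (f k) - cmod (g k))^2"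
      by (simp add: power2_eq_square ring_distribs)
    ultimately show ?thesis by linarith
  qed
  finally show "(cmod (f k + g k))\<^sup>2 \<le> 2 * (cmod (f k))\<^sup>2 + 2 * (cmod (g k))\<^sup>2" .
qed simp

lemma l2_scale: assumes "l2 f" shows "l2 (\<lambda>k. c * f k)"
  using summable_on_cmult_right[OF l2_sum[OF assms], of "(cmod c)^2"]
  unfolding l2_def by (simp add: norm_mult power_mult_distrib)

lemma l2_diff: assumes "l2 f" "l2 g" shows "l2 (\<lambda>k. f k - g k)"
  using l2_add[OF assms(1) l2_scale[OF assms(2), of "-1"]] by simp

lemma l2_zero: "l2 (\<lambda>k. 0)"
  unfolding l2_def by simp

lemma l2_cmod: "l2 f \<Longrightarrow> l2 (\<lambda>k. complex_of_real (cmod (f k)))"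
  unfolding l2_def by simp

lemma l2_pt:
  assumes "l2 f" shows "cmod (f k) \<le> l2norm f"
proof -
  have "infsum (\<lambda>k. (cmod (f k))\<^sup>2) {k} \<le> infsum (\<lambda>k. (cmod (f k))\<^sup>2) UNIV"
    by (rule infsum_mono2) (auto intro: l2_sum[OF assms])
  hence "(cmod (f k))\<^sup>2 \<le> (l2norm f)^2" by (simp add: l2norm_sq)
  thus ?thesis using l2norm_nonneg by (metis abs_le_square_iff abs_norm_cancel abs_of_nonneg)
qed

lemma l2norm_zeroD: "l2 f \<Longrightarrow> l2norm f = 0 \<Longrightarrow> f k = 0"
  using l2_pt[of f k] by simp

lemma l2_CS:
  assumes "l2 f" "l2 g"
  shows "(\<lambda>k. cmod (f k) * cmod (g k)) summable_on UNIV"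
    and "infsum (\<lambda>k. cmod (f k) * cmod (g k)) UNIV \<le> l2norm f * l2norm g"
proof -
  have S: "(\<lambda>k. (t/2) * (cmod (f k))^2 + (1/(2*t)) * (cmod (g k))^2) summable_on UNIV" for t
    using l2_sum[OF assms(1)] l2_sum[OF assms(2)]
    by (intro summable_on_add summable_on_cmult_right) auto
  show S1: "(\<lambda>k. cmod (f k) * cmod (g k)) summable_on UNIV"
    by (rule summable_on_comparison_test[OF S[of 1]])
       (use amgm_pt[of 1] in auto)
  have "infsum (\<lambda>k. cmod (f k) * cmod (g k)) UNIV \<le> sqrt ((l2norm f)^2) * sqrt ((l2norm g)^2)"
  proof (rule amgm_opt)
    fix t :: real assume t: "t > 0"
    have "infsum (\<lambda>k. cmod (f k) * cmod (g k)) UNIV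
        \<le> infsum (\<lambda>k. (t/2) * (cmod (f k))^2 + (1/(2*t)) * (cmod (g k))^2) UNIV"
      by (rule infsum_mono[OF S1 S]) (use amgm_pt[OF t] in auto)
    also have "\<dots> = infsum (\<lambda>k. (t/2) * (cmod (f k))^2) UNIV + infsum (\<lambda>k. (1/(2*t)) * (cmod (g k))^2) UNIV"
      by (rule infsum_add; rule summable_on_cmult_right; rule l2_sum; fact)
    also have "\<dots> = (t/2) * (l2norm f)^2 + (1/(2*t)) * (l2norm g)^2"
      unfolding l2norm_sq
      by (simp only: infsum_cmult_right[OF l2_sum[OF assms(1)], of "t/2"]
            infsum_cmult_right[OF l2_sum[OF assms(2)], of "1/(2*t)"])
    finally show "infsum (\<lambda>k. cmod (f k) * cmod (g k)) UNIV \<le> (t/2) * (l2norm f)^2 + (1/(2*t)) * (l2norm g)^2" .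
  qed auto
  thus "infsum (\<lambda>k. cmod (f k) * cmod (g k)) UNIV \<le> l2norm f * l2norm g"
    by (simp add: l2norm_nonneg)
qed


lemma summable_on_diff':
  fixes f g :: "'a \<Rightarrow> 'b::{topological_ab_group_add}"
  assumes "f summable_on A" "g summable_on A"
  shows "(\<lambda>x. f x - g x) summable_on A"
  using summable_on_add[OF assms(1) summable_on_uminus[THEN iffD2, OF assms(2)]] by simp

lemma infsum_diff':
  fixes f g :: "'a \<Rightarrow> 'b::{topological_ab_group_add,t2_space}"
  assumes "f summable_on A" "g summable_on A"
  shows "infsum (\<lambda>x. f x - g x) A = infsum f A - infsum g A"
  using infsum_add[OF assms(1) summable_on_uminus[THEN iffD2, OF assms(2)]] infsum_uminus[of g A] by simp

lemma l2inner_summable: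
  assumes "l2 f" "l2 g"
  shows "(\<lambda>k. cnj (f k) * g k) summable_on UNIV"
  unfolding summable_on_iff_abs_summable_on_complex
  using l2_CS(1)[OF assms] by (simp add: norm_mult)

lemma l2inner_bound:
  assumes "l2 f" "l2 g"
  shows "cmod (l2inner f g) \<le> l2norm f * l2norm g"
proof -
  have "cmod (l2inner f g) \<le> infsum (\<lambda>k. norm (cnj (f k) * g k)) UNIV"
    unfolding l2inner_def
    by (rule norm_infsum_bound) (use l2_CS(1)[OF assms] in \<open>simp add: norm_mult\<close>)
  also have "\<dots> = infsum (\<lambda>k. cmod (f k) * cmod (g k)) UNIV" by (simp add: norm_mult)
  also have "\<dots> \<le> l2norm f * l2norm g" by (rule l2_CS(2)[OF assms])
  finally show ?thesis .
qed

lemma l2inner_diff_right: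
  assumes "l2 f" "l2 g" "l2 h"
  shows "l2inner f (\<lambda>k. g k - h k) = l2inner f g - l2inner f h"
  unfolding l2inner_def
  using infsum_diff'[OF l2inner_summable[OF assms(1,2)] l2inner_summable[OF assms(1,3)]]
  by (simp add: right_diff_distrib)

lemma l2inner_diff_left:
  assumes "l2 f" "l2 g" "l2 h"
  shows "l2inner (\<lambda>k. f k - g k) h = l2inner f h - l2inner g h"
  unfolding l2inner_def
  using infsum_diff'[OF l2inner_summable[OF assms(1,3)] l2inner_summable[OF assms(2,3)]]
  by (simp add: left_diff_distrib)

lemma l2norm_triangle:
  assumes "l2 f" "l2 g"
  shows "l2norm (\<lambda>k. f k + g k) \<le> l2norm f + l2norm g"
proof -
  have S: "(\<lambda>k. (cmod (f k))\<^sup>2 + 2 * (cmod (f k) * cmod (g k)) + (cmod (g k))\<^sup>2) summable_on UNIV"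
    by (intro summable_on_add summable_on_cmult_right l2_sum l2_CS(1) assms)
  have "(l2norm (\<lambda>k. f k + g k))^2 = infsum (\<lambda>k. (cmod (f k + g k))\<^sup>2) UNIV"
    by (rule l2norm_sq)
  also have "\<dots> \<le> infsum (\<lambda>k. (cmod (f k))\<^sup>2 + 2 * (cmod (f k) * cmod (g k)) + (cmod (g k))\<^sup>2) UNIV"
  proof (rule infsum_mono[OF l2_sum[OF l2_add[OF assms]] S])
    fix k
    have "cmod (f k + g k) \<le> cmod (f k) + cmod (g k)" by (rule norm_triangle_ineq)
    hence "(cmod (f k + g k))\<^sup>2 \<le> (cmod (f k) + cmod (g k))\<^sup>2" by (intro power_mono) auto
    thus "(cmod (f k + g k))\<^sup>2 \<le> (cmod (f k))\<^sup>2 + 2 * (cmod (f k) * cmod (g k)) + (cmod (g k))\<^sup>2"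
      by (simp add: power2_sum)
  qed
  also have "\<dots> = infsum (\<lambda>k. (cmod (f k))\<^sup>2) UNIV + 2 * infsum (\<lambda>k. cmod (f k) * cmod (g k)) UNIV
       + infsum (\<lambda>k. (cmod (g k))\<^sup>2) UNIV"
    by (subst infsum_add, (intro summable_on_add summable_on_cmult_right l2_sum l2_CS(1) assms)+)
       (subst infsum_add, (intro summable_on_add summable_on_cmult_right l2_sum l2_CS(1) assms)+,
        simp only: infsum_cmult_right[OF l2_CS(1)[OF assms]])
  also have "\<dots> \<le> (l2norm f)^2 + 2 * (l2norm f * l2norm g) + (l2norm g)^2"
    using l2_CS(2)[OF assms] by (simp add: l2norm_sq)
  also have "\<dots> = (l2norm f + l2norm g)^2" by (simp add: power2_sum)
  finally show ?thesis
    by (rule power2_le_imp_le) (simp add: l2norm_nonneg add_nonneg_nonneg)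
qed

lemma l2norm_scale:
  assumes "l2 f"
  shows "l2norm (\<lambda>k. c * f k) = cmod c * l2norm f"
proof -
  have "infsum (\<lambda>k. (cmod (c * f k))\<^sup>2) UNIV = (cmod c)^2 * infsum (\<lambda>k. (cmod (f k))\<^sup>2) UNIV"
    by (simp only: norm_mult power_mult_distrib infsum_cmult_right[OF l2_sum[OF assms]])
  thus ?thesis unfolding l2norm_def by (simp add: real_sqrt_mult)
qed

lemma l2norm_minus_commute: "l2norm (\<lambda>k. f k - g k) = l2norm (\<lambda>k. g k - f k)"
  unfolding l2norm_def by (simp add: norm_minus_commute)

lemma l2norm_rev_triangle:
  assumes "l2 f" "l2 g"
  shows "\<bar>l2norm f - l2norm g\<bar> \<le> l2norm (\<lambda>k. f k - g k)"
proof -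
  have 1: "l2norm f \<le> l2norm (\<lambda>k. f k - g k) + l2norm g"
    using l2norm_triangle[OF l2_diff[OF assms] assms(2)] by simp
  have 2: "l2norm g \<le> l2norm (\<lambda>k. g k - f k) + l2norm f"
    using l2norm_triangle[OF l2_diff[OF assms(2,1)] assms(1)] by simp
  show ?thesis using 1 2 l2norm_minus_commute[of f g] by linarith
qed

definition l2conv :: "(nat \<Rightarrow> vec) \<Rightarrow> vec \<Rightarrow> bool" where
  "l2conv u u0 \<longleftrightarrow> (\<forall>n. l2 (u n)) \<and> l2 u0 \<and> (\<lambda>n. l2norm (\<lambda>k. u n k - u0 k)) \<longlonglongrightarrow> 0"

lemma l2norm_tendsto:
  assumes "l2conv u u0"
  shows "(\<lambda>n. l2norm (u n)) \<longlonglongrightarrow> l2norm u0"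
proof -
  have "((\<lambda>n. l2norm (u n) - l2norm u0) \<longlongrightarrow> 0) sequentially"
    by (rule Lim_null_comparison[where g="\<lambda>n. l2norm (\<lambda>k. u n k - u0 k)"])
       (use assms in \<open>auto simp: l2conv_def intro!: always_eventually l2norm_rev_triangle\<close>)
  thus ?thesis by (simp add: LIM_zero_iff)
qed

lemma l2inner_tendsto:
  assumes f: "l2conv f f0" and g: "l2conv g g0"
  shows "(\<lambda>n. l2inner (f n) (g n)) \<longlonglongrightarrow> l2inner f0 g0"
proof -
  have lf: "l2 (f n)" "l2 f0" and lg: "l2 (g n)" "l2 g0" for n using f g by (auto simp: l2conv_def)
  let ?df = "\<lambda>n. l2norm (\<lambda>k. f n k - f0 k)" and ?dg = "\<lambda>n. l2norm (\<lambda>k. g n k - g0 k)"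
  have df: "?df \<longlonglongrightarrow> 0" and dg: "?dg \<longlonglongrightarrow> 0" using f g by (auto simp: l2conv_def)
  have "((\<lambda>n. l2inner (f n) (g n) - l2inner f0 g0) \<longlongrightarrow> 0) sequentially"
  proof (rule Lim_null_comparison)
    show "\<forall>\<^sub>F n in sequentially. cmod (l2inner (f n) (g n) - l2inner f0 g0)
        \<le> ?df n * (?dg n + l2norm g0) + l2norm f0 * ?dg n"
    proof (rule always_eventually, rule allI)
      fix n
      have "l2inner (f n) (g n) - l2inner f0 g0
          = l2inner (\<lambda>k. f n k - f0 k) (g n) + l2inner f0 (\<lambda>k. g n k - g0 k)"
        using l2inner_diff_left[OF lf(1) lf(2) lg(1)] l2inner_diff_right[OF lf(2) lg(1) lg(2)] by simp
      also have "cmod \<dots> \<le> ?df n * l2norm (g n) + l2norm f0 * ?dg n"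
        by (rule order.trans[OF norm_triangle_ineq add_mono])
           (intro l2inner_bound l2_diff lf lg)+
      also have "l2norm (g n) \<le> ?dg n + l2norm g0"
        using l2norm_rev_triangle[OF lg(1)[of n] lg(2)] by linarith
      hence "?df n * l2norm (g n) \<le> ?df n * (?dg n + l2norm g0)"
        by (intro mult_left_mono l2norm_nonneg)
      finally show "cmod (l2inner (f n) (g n) - l2inner f0 g0) \<le> ?df n * (?dg n + l2norm g0) + l2norm f0 * ?dg n"
        by linarith
    qed
    show "((\<lambda>n. ?df n * (?dg n + l2norm g0) + l2norm f0 * ?dg n) \<longlongrightarrow> 0) sequentially"
      using tendsto_add[OF tendsto_mult[OF df tendsto_add[OF dg tendsto_const]] tendsto_mult[OF tendsto_const dg]]
      by simp
  qed
  thus ?thesis by (simp add: LIM_zero_iff)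
qed

lemma bounded_op_diff:
  assumes "bounded_op B" "l2 f" "l2 g"
  shows "B (\<lambda>k. f k - g k) = (\<lambda>k. B f k - B g k)"
  using assms unfolding bounded_op_def
  by (metis (no_types, lifting) ext mult_minus1 uminus_add_conv_diff diff_conv_add_uminus)

lemma bounded_op_conv:
  assumes B: "bounded_op B" and u: "l2conv u u0"
  shows "l2conv (\<lambda>n. B (u n)) (B u0)"
proof -
  have lu: "l2 (u n)" "l2 u0" for n using u by (auto simp: l2conv_def)
  obtain C where C: "\<And>f. l2 f \<Longrightarrow> l2norm (B f) \<le> C * l2norm f" using B unfolding bounded_op_def by blast
  have l2B: "\<And>f. l2 f \<Longrightarrow> l2 (B f)" using B unfolding bounded_op_def by blast
  have d: "(\<lambda>n. l2norm (\<lambda>k. u n k - u0 k)) \<longlonglongrightarrow> 0" using u by (simp add: l2conv_def)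
  have "(\<lambda>n. l2norm (\<lambda>k. B (u n) k - B u0 k)) \<longlonglongrightarrow> 0"
  proof (rule Lim_null_comparison)
    show "\<forall>\<^sub>F n in sequentially. norm (l2norm (\<lambda>k. B (u n) k - B u0 k)) \<le> C * l2norm (\<lambda>k. u n k - u0 k)"
      using C[OF l2_diff[OF lu]] bounded_op_diff[OF B lu] by (auto simp: l2norm_nonneg intro!: always_eventually)
    show "(\<lambda>n. C * l2norm (\<lambda>k. u n k - u0 k)) \<longlonglongrightarrow> 0"
      using tendsto_mult[OF tendsto_const d, of C] by simp
  qed
  thus ?thesis unfolding l2conv_def using l2B lu by auto
qed

definition kern :: "(int \<Rightarrow> real) \<Rightarrow> bool" where
  "kern V \<longleftrightarrow> (\<forall>n. V n \<ge> 0) \<and> V summable_on UNIV"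

lemma kern_nonneg: "kern V \<Longrightarrow> V n \<ge> 0" by (simp add: kern_def)
lemma kern_summ: "kern V \<Longrightarrow> V summable_on UNIV" by (simp add: kern_def)
lemma kern_SV_nonneg: "kern V \<Longrightarrow> infsum V UNIV \<ge> 0"
  by (simp add: kern_def infsum_nonneg)

lemma shift_summable:
  fixes j :: int
  assumes "V summable_on UNIV" shows "(\<lambda>k. V (j - k)) summable_on UNIV"
proof -
  have "(\<lambda>k. V (j - k)) summable_on UNIV \<longleftrightarrow> V summable_on UNIV"
    by (rule summable_on_reindex_bij_witness[where i="\<lambda>n. j - n" and j="\<lambda>k. j - k"]) (auto simp: algebra_simps)
  thus ?thesis using assms by simp
qed

lemma shift_infsum: fixes j :: int shows "infsum (\<lambda>k. V (j - k)) UNIV = infsum V UNIV"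
  by (rule infsum_reindex_bij_witness[where i="\<lambda>n. j - n" and j="\<lambda>k. j - k"]) (auto simp: algebra_simps)

lemma shift_summable':
  fixes k :: int
  assumes "V summable_on UNIV" shows "(\<lambda>j. V (j - k)) summable_on UNIV"
proof -
  have "(\<lambda>j. V (j - k)) summable_on UNIV \<longleftrightarrow> V summable_on UNIV"
    by (rule summable_on_reindex_bij_witness[where i="\<lambda>n. n + k" and j="\<lambda>j. j - k"]) auto
  thus ?thesis using assms by simp
qed

lemma shift_infsum': fixes k :: int shows "infsum (\<lambda>j. V (j - k)) UNIV = infsum V UNIV"
  by (rule infsum_reindex_bij_witness[where i="\<lambda>n. n + k" and j="\<lambda>j. j - k"]) auto

definition convsum :: "(int \<Rightarrow> real) \<Rightarrow> vec \<Rightarrow> int \<Rightarrow> real" where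
  "convsum V f j = infsum (\<lambda>k. V (j - k) * cmod (f k)) UNIV"

lemma conv_summable:
  assumes V: "kern V" and f: "l2 f"
  shows "(\<lambda>k. V (j - k) * cmod (f k)) summable_on UNIV"
proof (rule summable_on_comparison_test)
  show "(\<lambda>k. V (j - k) * l2norm f) summable_on UNIV"
    by (rule summable_on_cmult_left, rule shift_summable, rule kern_summ[OF V])
qed (auto intro!: mult_left_mono l2_pt f kern_nonneg[OF V] mult_nonneg_nonneg)

lemma convsum_nonneg: "kern V \<Longrightarrow> convsum V f j \<ge> 0"
  unfolding convsum_def by (auto intro!: infsum_nonneg mult_nonneg_nonneg simp: kern_def)

lemma conv_l2:
  assumes V: "kern V" and f: "l2 f"
  shows "l2 (\<lambda>j. complex_of_real (convsum V f j))"
    and "l2norm (\<lambda>j. complex_of_real (convsum V f j)) \<le> infsum V UNIV * l2norm f"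
proof -
  define SV where "SV = infsum V UNIV"
  have SV0: "SV \<ge> 0" unfolding SV_def by (rule kern_SV_nonneg[OF V])
  have Vn: "V n \<ge> 0" for n using V by (simp add: kern_def)
  define Q where "Q j = infsum (\<lambda>k. V (j - k) * (cmod (f k))^2) UNIV" for j
  have Qs: "(\<lambda>k. V (j - k) * (cmod (f k))^2) summable_on UNIV" for j
  proof (rule summable_on_comparison_test)
    show "(\<lambda>k. V (j - k) * (l2norm f)^2) summable_on UNIV"
      by (rule summable_on_cmult_left, rule shift_summable, rule kern_summ[OF V])
  qed (auto intro!: mult_left_mono power_mono l2_pt f Vn mult_nonneg_nonneg)
  have pt: "(convsum V f j)^2 \<le> SV * Q j" for j
  proof -
    have "convsum V f j \<le> sqrt (Q j) * sqrt SV"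
    proof (rule amgm_opt)
      fix t :: real assume t: "t > 0"
      have "convsum V f j \<le> infsum (\<lambda>k. (t/2) * (V (j - k) * (cmod (f k))^2) + (1/(2*t)) * V (j - k)) UNIV"
        unfolding convsum_def
      proof (rule infsum_mono)
        show "(\<lambda>k. V (j - k) * cmod (f k)) summable_on UNIV" by (rule conv_summable[OF V f])
        show "(\<lambda>k. t / 2 * (V (j - k) * (cmod (f k))\<^sup>2) + 1 / (2 * t) * V (j - k)) summable_on UNIV"
          by (intro summable_on_add summable_on_cmult_right Qs shift_summable kern_summ[OF V])
        fix k
        have "cmod (f k) * 1 \<le> (t/2) * (cmod (f k))^2 + (1/(2*t)) * 1^2" by (rule amgm_pt[OF t])
        hence "V (j - k) * cmod (f k) \<le> V (j - k) * ((t/2) * (cmod (f k))^2 + (1/(2*t)))"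
          by (intro mult_left_mono Vn) simp
        thus "V (j - k) * cmod (f k) \<le> t / 2 * (V (j - k) * (cmod (f k))\<^sup>2) + 1 / (2 * t) * V (j - k)"
          by (simp add: algebra_simps)
      qed
      also have "\<dots> = (t/2) * Q j + (1/(2*t)) * SV"
        unfolding Q_def SV_def
        by (subst infsum_add, (intro summable_on_cmult_right Qs shift_summable kern_summ[OF V])+)
           (simp only: infsum_cmult_right[OF Qs] infsum_cmult_right[OF shift_summable[OF kern_summ[OF V]]]
            shift_infsum)
      finally show "convsum V f j \<le> (t/2) * Q j + (1/(2*t)) * SV" .
    qed (auto simp: Q_def SV0 intro!: infsum_nonneg mult_nonneg_nonneg Vn)
    hence "(convsum V f j)^2 \<le> (sqrt (Q j) * sqrt SV)^2"
      by (intro power_mono convsum_nonneg[OF V])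
    also have "\<dots> = Q j * SV" using SV0 
      by (simp add: power_mult_distrib Q_def infsum_nonneg Vn)
    finally show ?thesis by (simp add: mult.commute)
  qed
  have P: "(\<lambda>(k, j). V (j - k) * (cmod (f k))^2) summable_on UNIV \<times> UNIV"
  proof (rule summable_on_SigmaI[where g="\<lambda>k. SV * (cmod (f k))^2"])
    fix k :: int
    show "((\<lambda>j. case (k, j) of (k, j) \<Rightarrow> V (j - k) * (cmod (f k))\<^sup>2) has_sum SV * (cmod (f k))\<^sup>2) UNIV"
      using has_sum_cmult_left[OF has_sum_infsum[OF shift_summable'[OF kern_summ[OF V]], of k], of "(cmod (f k))^2"]
      by (simp add: shift_infsum' SV_def)
    show "(\<lambda>k. SV * (cmod (f k))\<^sup>2) summable_on UNIV"
      by (rule summable_on_cmult_right, rule l2_sum[OF f])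
  qed (auto intro!: mult_nonneg_nonneg Vn)
  have P': "(\<lambda>(j, k). V (j - k) * (cmod (f k))^2) summable_on UNIV \<times> UNIV"
    using P by (subst summable_on_swap) (simp add: case_prod_unfold)
  have sumQ: "Q summable_on UNIV" and totQ: "infsum Q UNIV = SV * (l2norm f)^2"
  proof -
    have "(\<lambda>j. infsum (\<lambda>k. V (j - k) * (cmod (f k))^2) UNIV) summable_on UNIV"
      using summable_on_SigmaD[OF P'[unfolded case_prod_unfold]] Qs by simp
    thus "Q summable_on UNIV" by (simp add: Q_def[abs_def])
    have "infsum Q UNIV = infsum (\<lambda>k. infsum (\<lambda>j. V (j - k) * (cmod (f k))^2) UNIV) UNIV"
      unfolding Q_def by (rule infsum_swap_banach[OF P'])
    also have "\<dots> = infsum (\<lambda>k. SV * (cmod (f k))^2) UNIV"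
      by (simp add: infsum_cmult_left[OF shift_summable'[OF kern_summ[OF V]]] shift_infsum' SV_def
          mult.commute)
    also have "\<dots> = SV * (l2norm f)^2"
      by (simp add: infsum_cmult_right[OF l2_sum[OF f]] l2norm_sq)
    finally show "infsum Q UNIV = SV * (l2norm f)^2" .
  qed
  have S2: "(\<lambda>j. (convsum V f j)^2) summable_on UNIV"
    by (rule summable_on_comparison_test[OF summable_on_cmult_right[OF sumQ, of SV]])
       (auto intro: pt)
  show l2c: "l2 (\<lambda>j. complex_of_real (convsum V f j))"
    unfolding l2_def using S2 by simp
  have "(l2norm (\<lambda>j. complex_of_real (convsum V f j)))^2 = infsum (\<lambda>j. (convsum V f j)^2) UNIV"
    by (simp add: l2norm_sq)
  also have "\<dots> \<le> infsum (\<lambda>j. SV * Q j) UNIV"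
    by (rule infsum_mono[OF S2 summable_on_cmult_right[OF sumQ]]) (rule pt)
  also have "\<dots> = (SV * l2norm f)^2"
    by (simp add: infsum_cmult_right[OF sumQ] totQ power2_eq_square)
  finally have "(l2norm (\<lambda>j. complex_of_real (convsum V f j)))^2 \<le> (SV * l2norm f)^2" .
  thus "l2norm (\<lambda>j. complex_of_real (convsum V f j)) \<le> infsum V UNIV * l2norm f"
    unfolding SV_def[symmetric]
    by (rule power2_le_imp_le) (simp add: SV0 l2norm_nonneg)
qed

lemma conv_dom:
  assumes V: "kern V" and f: "l2 f" and w: "\<And>j. cmod (w j) \<le> convsum V f j"
  shows "l2 w" and "l2norm w \<le> infsum V UNIV * l2norm f"
proof -
  have w': "cmod (w j) \<le> cmod (complex_of_real (convsum V f j))" for j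
    using w[of j] convsum_nonneg[OF V] by simp
  show "l2 w" by (rule l2_dom[OF conv_l2(1)[OF V f] w'])
  show "l2norm w \<le> infsum V UNIV * l2norm f"
    by (rule order.trans[OF l2norm_mono[OF conv_l2(1)[OF V f] w'] conv_l2(2)[OF V f]])
qed

definition kop :: "(int \<Rightarrow> int \<Rightarrow> complex) \<Rightarrow> op" where
  "kop M f = (\<lambda>j. infsum (\<lambda>k. M j k * f k) UNIV)"

definition kdom :: "(int \<Rightarrow> real) \<Rightarrow> (int \<Rightarrow> int \<Rightarrow> complex) \<Rightarrow> bool" where
  "kdom V M \<longleftrightarrow> kern V \<and> (\<forall>j k. cmod (M j k) \<le> V (j - k))"

lemma kop_summable:
  assumes "kdom V M" "l2 f"
  shows "(\<lambda>k. M j k * f k) summable_on UNIV"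
  unfolding summable_on_iff_abs_summable_on_complex
proof (rule summable_on_comparison_test[OF conv_summable[of V f j]])
  show "kern V" using assms by (simp add: kdom_def)
  fix k show "norm (M j k * f k) \<le> V (j - k) * cmod (f k)"
    using assms unfolding kdom_def by (simp add: norm_mult mult_right_mono)
qed (use assms in auto)

lemma kop_pt:
  assumes "kdom V M" "l2 f"
  shows "cmod (kop M f j) \<le> convsum V f j"
proof -
  have "cmod (kop M f j) \<le> infsum (\<lambda>k. norm (M j k * f k)) UNIV"
    unfolding kop_def
    by (rule norm_infsum_bound) (use kop_summable[OF assms] in \<open>simp add: summable_on_iff_abs_summable_on_complex\<close>)
  also have "\<dots> \<le> convsum V f j"
    unfolding convsum_def
  proof (rule infsum_mono)
    show "(\<lambda>k. norm (M j k * f k)) summable_on UNIV"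
      using kop_summable[OF assms] by (simp add: summable_on_iff_abs_summable_on_complex)
    show "(\<lambda>k. V (j - k) * cmod (f k)) summable_on UNIV"
      using assms by (intro conv_summable) (auto simp: kdom_def)
    fix k show "norm (M j k * f k) \<le> V (j - k) * cmod (f k)"
      using assms unfolding kdom_def by (simp add: norm_mult mult_right_mono)
  qed
  finally show ?thesis .
qed

lemma kop_bounded:
  assumes "kdom V M"
  shows "bounded_op (kop M)"
    and "\<And>f. l2 f \<Longrightarrow> l2norm (kop M f) \<le> infsum V UNIV * l2norm f"
proof -
  have V: "kern V" using assms by (simp add: kdom_def)
  show nb: "\<And>f. l2 f \<Longrightarrow> l2norm (kop M f) \<le> infsum V UNIV * l2norm f"
    by (rule conv_dom(2)[OF V], assumption, rule kop_pt[OF assms], assumption)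
  show "bounded_op (kop M)"
    unfolding bounded_op_def
  proof (intro conjI allI impI)
    fix f assume "l2 f" thus "l2 (kop M f)"
      by (rule conv_dom(1)[OF V], intro kop_pt[OF assms])
  next
    fix f g c assume f: "l2 f" and g: "l2 g"
    show "kop M (\<lambda>k. f k + c * g k) = (\<lambda>k. kop M f k + c * kop M g k)"
    proof
      fix j
      have "kop M (\<lambda>k. f k + c * g k) j = infsum (\<lambda>k. M j k * f k + c * (M j k * g k)) UNIV"
        unfolding kop_def by (simp add: algebra_simps)
      also have "\<dots> = kop M f j + c * kop M g j"
        unfolding kop_def
        by (subst infsum_add, rule kop_summable[OF assms f], rule summable_on_cmult_right,
            rule kop_summable[OF assms g], subst infsum_cmult_right, rule kop_summable[OF assms g], rule refl)
      finally show "kop M (\<lambda>k. f k + c * g k) j = kop M f j + c * kop M g j" .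
    qed
  next
    show "\<exists>C. \<forall>f. l2 f \<longrightarrow> l2norm (kop M f) \<le> C * l2norm f" using nb by blast
  qed
qed

lemma geo_sum_nat:
  fixes \<tau> :: real
  assumes "0 \<le> \<tau>" "\<tau> < 1" "finite N"
  shows "(\<Sum>m\<in>N. \<tau> ^ m) \<le> 1 / (1 - \<tau>)"
proof -
  have "(\<Sum>m\<in>N. \<tau> ^ m) \<le> suminf (\<lambda>m. \<tau> ^ m)"
    by (rule sum_le_suminf) (use assms in \<open>auto intro: summable_geometric\<close>)
  also have "\<dots> = 1 / (1 - \<tau>)" using assms by (intro suminf_geometric) auto
  finally show ?thesis .
qed

lemma dpow:
  fixes \<tau> :: real
  assumes "0 \<le> \<tau>" "\<tau> < 1"
  shows "real d * \<tau> ^ d \<le> 1 / (1 - \<tau>)"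
proof -
  have "real d * \<tau> ^ d = (\<Sum>i<d. \<tau> ^ d)" by simp
  also have "\<dots> \<le> (\<Sum>i<d. \<tau> ^ i)"
    by (rule sum_mono) (use assms in \<open>auto intro: power_decreasing\<close>)
  also have "\<dots> \<le> 1 / (1 - \<tau>)" by (rule geo_sum_nat) (use assms in auto)
  finally show ?thesis .
qed

lemma geo_int_summable:
  fixes \<tau> :: real
  assumes "0 \<le> \<tau>" "\<tau> < 1"
  shows "(\<lambda>n::int. \<tau> ^ nat \<bar>n\<bar>) summable_on UNIV"
proof (rule nonneg_bdd_above_summable_on)
  show "bdd_above (sum (\<lambda>n::int. \<tau> ^ nat \<bar>n\<bar>) ` {F. F \<subseteq> UNIV \<and> finite F})"
  proof (rule bdd_aboveI2)
    fix F :: "int set" assume "F \<in> {F. F \<subseteq> UNIV \<and> finite F}"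
    hence F: "finite F" by simp
    define A where "A = F \<inter> {n. n \<ge> 0}"
    define B where "B = F \<inter> {n. n < 0}"
    have "F = A \<union> B" "A \<inter> B = {}" unfolding A_def B_def by auto
    hence "sum (\<lambda>n. \<tau> ^ nat \<bar>n\<bar>) F = sum (\<lambda>n. \<tau> ^ nat \<bar>n\<bar>) A + sum (\<lambda>n. \<tau> ^ nat \<bar>n\<bar>) B"
      using F by (metis finite_Un sum.union_disjoint)
    also have "sum (\<lambda>n. \<tau> ^ nat \<bar>n\<bar>) A = sum (\<lambda>m. \<tau> ^ m) ((\<lambda>n. nat \<bar>n\<bar>) ` A)"
      by (subst sum.reindex) (auto simp: inj_on_def A_def)
    also have "\<dots> \<le> 1 / (1 - \<tau>)" by (rule geo_sum_nat) (use assms F in \<open>auto simp: A_def\<close>)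
    also have "sum (\<lambda>n. \<tau> ^ nat \<bar>n\<bar>) B = sum (\<lambda>m. \<tau> ^ m) ((\<lambda>n. nat \<bar>n\<bar>) ` B)"
      by (subst sum.reindex) (auto simp: inj_on_def B_def)
    also have "\<dots> \<le> 1 / (1 - \<tau>)" by (rule geo_sum_nat) (use assms F in \<open>auto simp: B_def\<close>)
    finally show "sum (\<lambda>n. \<tau> ^ nat \<bar>n\<bar>) F \<le> 2 / (1 - \<tau>)" by simp
  qed
qed (use assms in auto)

lemma geo_kern:
  fixes \<tau> C :: real
  assumes "0 \<le> \<tau>" "\<tau> < 1" "C \<ge> 0"
  shows "kern (\<lambda>n. C * \<tau> ^ nat \<bar>n\<bar>)"
  unfolding kern_def using assms
  by (auto intro!: summable_on_cmult_right geo_int_summable)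

lemma geo_infsum:
  fixes \<tau> C :: real
  shows "infsum (\<lambda>n::int. C * \<tau> ^ nat \<bar>n\<bar>) UNIV = C * infsum (\<lambda>n::int. \<tau> ^ nat \<bar>n\<bar>) UNIV"
  by (rule infsum_cmult_right')

lemma telescope:
  fixes f :: "int \<Rightarrow> complex"
  assumes "x \<le> y"
  shows "f x - f y = (\<Sum>i\<in>{x..<y}. Delta f i)"
  using assms
proof (induction y rule: int_ge_induct)
  case base thus ?case by simp
next
  case (step y)
  have "{x..<y+1} = insert y {x..<y}" using step.hyps by auto
  hence "(\<Sum>i\<in>{x..<y+1}. Delta f i) = Delta f y + (\<Sum>i\<in>{x..<y}. Delta f i)" by simp
  moreover have "f x = (\<Sum>i\<in>{x..<y}. Delta f i) + f y" using step.IH by (metis diff_add_cancel)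
  ultimately show ?case by (simp add: Delta_def)
qed

lemma sum_cbound:
  fixes h :: "int \<Rightarrow> complex"
  assumes "finite S" "c \<ge> 0" "\<And>i. i \<in> S \<Longrightarrow> c * cmod (h i) \<le> B"
  shows "c * cmod (sum h S) \<le> real (card S) * B"
proof -
  have "c * cmod (sum h S) \<le> c * (\<Sum>i\<in>S. cmod (h i))"
    by (intro mult_left_mono norm_sum assms)
  also have "\<dots> = (\<Sum>i\<in>S. c * cmod (h i))" by (simp add: sum_distrib_left)
  also have "\<dots> \<le> (\<Sum>i\<in>S. B)" by (intro sum_mono assms)
  finally show ?thesis by simp
qed

lemma card_ivl: "x \<le> y \<Longrightarrow> real (card {x..<y::int}) = real_of_int (y - x)"
  by simp

locale gam =
  fixes \<gamma> :: "int \<Rightarrow> complex" and G B1 B2 :: real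
  assumes G: "\<And>k. cmod (\<gamma> k) \<le> G"
    and B1: "\<And>k. cmod (of_int k * Delta \<gamma> k) \<le> B1"
    and B2: "\<And>k. cmod ((of_int k)^2 * Delta (Delta \<gamma>) k) \<le> B2"
begin

lemma G0: "G \<ge> 0" using G[of 0] norm_ge_zero order_trans by blast
lemma C10: "B1 \<ge> 0" using B1[of 0] norm_ge_zero order_trans by blast
lemma C20: "B2 \<ge> 0" using B2[of 0] norm_ge_zero order_trans by blast

lemma region:
  fixes i k D :: int
  assumes "\<bar>i - k\<bar> \<le> D" "3 * D \<le> \<bar>k\<bar>"
  shows "2 * \<bar>k\<bar> \<le> 3 * \<bar>i\<bar>"
  using assms by linarith

lemma R1:
  fixes i k D :: int
  assumes "\<bar>i - k\<bar> \<le> D" "3 * D \<le> \<bar>k\<bar>"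
  shows "\<bar>real_of_int k\<bar> * cmod (Delta \<gamma> i) \<le> (3/2) * B1"
proof -
  have r: "2 * \<bar>real_of_int k\<bar> \<le> 3 * \<bar>real_of_int i\<bar>" using region[OF assms] by linarith
  have "\<bar>real_of_int k\<bar> * cmod (Delta \<gamma> i) \<le> ((3/2) * \<bar>real_of_int i\<bar>) * cmod (Delta \<gamma> i)"
    by (rule mult_right_mono) (use r in auto)
  moreover have "\<bar>real_of_int i\<bar> * cmod (Delta \<gamma> i) = cmod (of_int i * Delta \<gamma> i)"
    by (simp add: norm_mult)
  ultimately show ?thesis using B1[of i] by (simp add: mult.assoc)
qed

lemma R2:
  fixes i k D :: int
  assumes "\<bar>i - k\<bar> \<le> D" "3 * D \<le> \<bar>k\<bar>"
  shows "(real_of_int k)^2 * cmod (Delta (Delta \<gamma>) i) \<le> (9/4) * B2"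
proof -
  have r: "2 * \<bar>real_of_int k\<bar> \<le> 3 * \<bar>real_of_int i\<bar>" using region[OF assms] by linarith
  hence "(2 * \<bar>real_of_int k\<bar>)^2 \<le> (3 * \<bar>real_of_int i\<bar>)^2" by (intro power_mono) auto
  hence r2: "(real_of_int k)^2 \<le> (9/4) * (real_of_int i)^2" by (simp add: power_mult_distrib)
  have "(real_of_int k)^2 * cmod (Delta (Delta \<gamma>) i) \<le> ((9/4) * (real_of_int i)^2) * cmod (Delta (Delta \<gamma>) i)"
    by (rule mult_right_mono[OF r2]) simp
  moreover have "(real_of_int i)^2 * cmod (Delta (Delta \<gamma>) i) = cmod ((of_int i)^2 * Delta (Delta \<gamma>) i)"
    by (simp add: norm_mult norm_power)
  ultimately show ?thesis using B2[of i] by (simp add: mult.assoc)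
qed

lemma dd_le:
  fixes i k D :: int
  assumes "i \<le> k" "\<bar>i - k\<bar> \<le> D" "3 * D \<le> \<bar>k\<bar>"
  shows "(real_of_int k)^2 * cmod (Delta \<gamma> i - Delta \<gamma> k) \<le> real_of_int \<bar>i - k\<bar> * ((9/4) * B2)"
proof -
  have "(real_of_int k)^2 * cmod (Delta \<gamma> i - Delta \<gamma> k)
      = (real_of_int k)^2 * cmod (\<Sum>t\<in>{i..<k}. Delta (Delta \<gamma>) t)"
    using telescope[OF assms(1), of "Delta \<gamma>"] by simp
  also have "\<dots> \<le> real (card {i..<k}) * ((9/4) * B2)"
  proof (rule sum_cbound)
    fix t assume "t \<in> {i..<k}"
    thus "(real_of_int k)^2 * cmod (Delta (Delta \<gamma>) t) \<le> (9/4) * B2"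
      using assms by (intro R2[where D=D]) auto
  qed auto
  finally show ?thesis using assms(1) by simp
qed

lemma dd_bound:
  fixes i k D :: int
  assumes "\<bar>i - k\<bar> \<le> D" "3 * D \<le> \<bar>k\<bar>"
  shows "(real_of_int k)^2 * cmod (Delta \<gamma> i - Delta \<gamma> k) \<le> real_of_int \<bar>i - k\<bar> * ((9/4) * B2)"
proof (cases "i \<le> k")
  case True thus ?thesis using dd_le assms by blast
next
  case False
  have "(real_of_int k)^2 * cmod (Delta \<gamma> k - Delta \<gamma> i)
      = (real_of_int k)^2 * cmod (\<Sum>t\<in>{k..<i}. Delta (Delta \<gamma>) t)"
    using telescope[of k i "Delta \<gamma>"] False by simp
  also have "\<dots> \<le> real (card {k..<i}) * ((9/4) * B2)"
  proof (rule sum_cbound)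
    fix t assume "t \<in> {k..<i}"
    thus "(real_of_int k)^2 * cmod (Delta (Delta \<gamma>) t) \<le> (9/4) * B2"
      using assms False by (intro R2[where D=D]) auto
  qed auto
  finally show ?thesis using False by (simp add: norm_minus_commute)
qed

lemma gg_le:
  fixes x y k D :: int
  assumes "x \<le> y" "\<bar>x - k\<bar> \<le> D" "\<bar>y - k\<bar> \<le> D" "3 * D \<le> \<bar>k\<bar>"
  shows "(real_of_int k)^2 * cmod (\<gamma> x - \<gamma> y - of_int (y - x) * Delta \<gamma> k)
       \<le> real_of_int (y - x) * (real_of_int D * ((9/4) * B2))"
proof -
  have "\<gamma> x - \<gamma> y - of_int (y - x) * Delta \<gamma> k = (\<Sum>i\<in>{x..<y}. Delta \<gamma> i - Delta \<gamma> k)"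
    using telescope[OF assms(1), of \<gamma>] assms(1) by (simp add: sum_subtractf)
  hence "(real_of_int k)^2 * cmod (\<gamma> x - \<gamma> y - of_int (y - x) * Delta \<gamma> k)
      = (real_of_int k)^2 * cmod (\<Sum>i\<in>{x..<y}. Delta \<gamma> i - Delta \<gamma> k)" by simp
  also have "\<dots> \<le> real (card {x..<y}) * (real_of_int D * ((9/4) * B2))"
  proof (rule sum_cbound)
    fix i assume i: "i \<in> {x..<y}"
    hence iD: "\<bar>i - k\<bar> \<le> D" using assms by auto
    have "(real_of_int k)^2 * cmod (Delta \<gamma> i - Delta \<gamma> k) \<le> real_of_int \<bar>i - k\<bar> * ((9/4) * B2)"
      by (rule dd_bound[OF iD assms(4)])
    also have "\<dots> \<le> real_of_int D * ((9/4) * B2)"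
      by (rule mult_right_mono) (use iD C20 in auto)
    finally show "(real_of_int k)^2 * cmod (Delta \<gamma> i - Delta \<gamma> k) \<le> real_of_int D * ((9/4) * B2)" .
  qed auto
  finally show ?thesis using assms(1) by simp
qed

lemma gg_bound:
  fixes x y k D :: int
  assumes "\<bar>x - k\<bar> \<le> D" "\<bar>y - k\<bar> \<le> D" "3 * D \<le> \<bar>k\<bar>"
  shows "(real_of_int k)^2 * cmod (\<gamma> x - \<gamma> y - of_int (y - x) * Delta \<gamma> k)
       \<le> real_of_int \<bar>y - x\<bar> * (real_of_int D * ((9/4) * B2))"
proof (cases "x \<le> y")
  case True thus ?thesis using gg_le[OF True assms] by simp
next
  case False
  have "\<gamma> x - \<gamma> y - of_int (y - x) * Delta \<gamma> k = - (\<gamma> y - \<gamma> x - of_int (x - y) * Delta \<gamma> k)"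
    by (simp add: algebra_simps)
  thus ?thesis using gg_le[of y x k D] False assms by (simp only: norm_minus_cancel) simp
qed

lemma gb1:
  fixes j k D :: int
  assumes "\<bar>j - k\<bar> \<le> D" "3 * D \<le> \<bar>k\<bar>"
  shows "\<bar>real_of_int k\<bar> * cmod (\<gamma> k - \<gamma> j) \<le> real_of_int \<bar>j - k\<bar> * ((3/2) * B1)"
proof (cases "j \<le> k")
  case True
  have "\<bar>real_of_int k\<bar> * cmod (\<gamma> j - \<gamma> k) = \<bar>real_of_int k\<bar> * cmod (\<Sum>i\<in>{j..<k}. Delta \<gamma> i)"
    using telescope[OF True, of \<gamma>] by simp
  also have "\<dots> \<le> real (card {j..<k}) * ((3/2) * B1)"
  proof (rule sum_cbound)
    fix t assume "t \<in> {j..<k}"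
    thus "\<bar>real_of_int k\<bar> * cmod (Delta \<gamma> t) \<le> (3/2) * B1"
      using assms True by (intro R1[where D=D]) auto
  qed auto
  finally show ?thesis using True by (simp add: norm_minus_commute)
next
  case False
  have "\<bar>real_of_int k\<bar> * cmod (\<gamma> k - \<gamma> j) = \<bar>real_of_int k\<bar> * cmod (\<Sum>i\<in>{k..<j}. Delta \<gamma> i)"
    using telescope[of k j \<gamma>] False by simp
  also have "\<dots> \<le> real (card {k..<j}) * ((3/2) * B1)"
  proof (rule sum_cbound)
    fix t assume "t \<in> {k..<j}"
    thus "\<bar>real_of_int k\<bar> * cmod (Delta \<gamma> t) \<le> (3/2) * B1"
      using assms False by (intro R1[where D=D]) auto
  qed auto
  finally show ?thesis using False by simp
qed

end

context gam begin

definition CE :: real where "CE = 1100 * G + 5 * B1 + 29 * B2"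

lemma tri4: "cmod (\<gamma> j - 2 * \<gamma> x + \<gamma> l) \<le> 4 * G"
proof -
  have "cmod (\<gamma> j - 2 * \<gamma> x + \<gamma> l) \<le> cmod (\<gamma> j) + cmod (2 * \<gamma> x) + cmod (\<gamma> l)"
  proof -
    have "cmod (\<gamma> j - 2 * \<gamma> x + \<gamma> l) \<le> cmod (\<gamma> j - 2 * \<gamma> x) + cmod (\<gamma> l)"
      by (rule norm_triangle_ineq)
    moreover have "cmod (\<gamma> j - 2 * \<gamma> x) \<le> cmod (\<gamma> j) + cmod (2 * \<gamma> x)"
      by (rule norm_triangle_ineq4)
    ultimately show ?thesis by linarith
  qed
  also have "\<dots> \<le> G + 2 * G + G" using G[of j] G[of x] G[of l] by (simp add: norm_mult)
  finally show ?thesis by simp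
qed

lemma cmod_of_int_mult: "cmod (of_int (a*b) * z) = real_of_int \<bar>a\<bar> * real_of_int \<bar>b\<bar> * cmod z"
  by (simp add: norm_mult abs_mult)

lemma abs2: "\<bar>2*(x::real) + 2*y\<bar> = 2*\<bar>x+y\<bar>" by (smt (verit))

lemma Ksq: "(K::real)^2 = \<bar>K\<bar> * \<bar>K\<bar>"
  by (simp add: power2_eq_square)

lemma mm: "0 \<le> a \<Longrightarrow> 0 \<le> b \<Longrightarrow> a \<le> (A::real) \<Longrightarrow> b \<le> B \<Longrightarrow> a * b \<le> A * B"
  by (meson mult_mono order_trans)

lemma E_bound:
  fixes j k l :: int
  assumes kj: "k \<noteq> j"
  shows "cmod (of_int ((j+k)*(k+l)) * (\<gamma> j - 2*\<gamma> k + \<gamma> l)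
             + of_int ((j+(j+l-k))*((j+l-k)+l)) * (\<gamma> j - 2*\<gamma> (j+l-k) + \<gamma> l))
         \<le> CE * (real_of_int (\<bar>j-k\<bar> + \<bar>k-l\<bar>))^2"
proof -
  define D where "D = \<bar>j-k\<bar> + \<bar>k-l\<bar>"
  define k' where "k' = j + l - k"
  define RD where "RD = real_of_int D"
  have D1: "D \<ge> 1" using kj by (simp add: D_def)
  have RD1: "RD \<ge> 1" using D1 by (simp add: RD_def)
  let ?E = "\<lambda>x. of_int ((j+x)*(x+l)) * (\<gamma> j - 2*\<gamma> x + \<gamma> l)"
  have cE: "cmod (?E x) = real_of_int \<bar>j+x\<bar> * real_of_int \<bar>x+l\<bar> * cmod (\<gamma> j - 2*\<gamma> x + \<gamma> l)" for x
    by (subst norm_mult, subst norm_of_int) (simp add: abs_mult)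
  have G0': "G \<ge> 0" by (rule G0)
  show ?thesis
  proof (cases "\<bar>k\<bar> < 3 * D")
    case True
    have TR: "real_of_int \<bar>k\<bar> < real_of_int (3 * D)" using True by (simp only: of_int_less_iff)
    have a1_1: "real_of_int \<bar>j+k\<bar> \<le> 7 * RD"
      using TR unfolding RD_def D_def k'_def by (simp; smt (verit))
    have a1_2: "real_of_int \<bar>k+l\<bar> \<le> 7 * RD"
      using TR unfolding RD_def D_def k'_def by (simp; smt (verit))
    have a1_3: "real_of_int \<bar>j+k'\<bar> \<le> 15 * RD"
      using TR unfolding RD_def D_def k'_def by (simp; smt (verit))
    have a1_4: "real_of_int \<bar>k'+l\<bar> \<le> 15 * RD"
      using TR unfolding RD_def D_def k'_def by (simp; smt (verit))
    note a1 = a1_1 a1_2 a1_3 a1_4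
    have "cmod (?E k) \<le> (7 * RD) * (7 * RD) * (4 * G)"
      unfolding cE by (intro mm mult_nonneg_nonneg a1 tri4) auto
    moreover have "cmod (?E k') \<le> (15 * RD) * (15 * RD) * (4 * G)"
      unfolding cE by (intro mm mult_nonneg_nonneg a1 tri4) auto
    moreover have "(7 * RD) * (7 * RD) * (4 * G) = 196 * G * RD^2"
      "(15 * RD) * (15 * RD) * (4 * G) = 900 * G * RD^2" by (simp_all add: power2_eq_square)
    moreover have "cmod (?E k + ?E k') \<le> cmod (?E k) + cmod (?E k')" by (rule norm_triangle_ineq)
    ultimately have "cmod (?E k + ?E k') \<le> 1096 * G * RD^2" by linarith
    also have "\<dots> \<le> CE * RD^2"
      unfolding CE_def using G0 C10 C20 by (intro mult_right_mono) auto
    finally show ?thesis unfolding RD_def D_def k'_def .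
  next
    case False
    hence kD: "3 * D \<le> \<bar>k\<bar>" by simp
    have kDR: "real_of_int (3 * D) \<le> real_of_int \<bar>k\<bar>" using kD by (simp only: of_int_le_iff)
    have D1R: "real_of_int D \<ge> 1" using D1 by simp
    define K where "K = real_of_int k"
    have Kpos: "\<bar>K\<bar> \<ge> 3" using kDR D1R unfolding K_def by simp
    hence K2pos: "K^2 > 0" by (simp add: zero_less_power2) 
    define dk where "dk = Delta \<gamma> k"
    define e1 where "e1 = \<gamma> j - \<gamma> k - of_int (k - j) * dk"
    define e2 where "e2 = \<gamma> k - \<gamma> l - of_int (l - k) * dk"
    define e3 where "e3 = \<gamma> j - \<gamma> k' - of_int (k' - j) * dk"
    define e4 where "e4 = \<gamma> k' - \<gamma> l - of_int (l - k') * dk"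
    have ident: "?E k + ?E k' = of_int (2*(j+l)*(2*k-j-l)^2) * dk
        + of_int ((j+k)*(k+l)) * (e1 - e2) + of_int ((j+k')*(k'+l)) * (e3 - e4)"
      unfolding e1_def e2_def e3_def e4_def k'_def
      by (simp add: algebra_simps power2_eq_square)
    have dD_1: "\<bar>j - k\<bar> \<le> D"
      unfolding D_def k'_def by linarith
    have dD_2: "\<bar>l - k\<bar> \<le> D"
      unfolding D_def k'_def by linarith
    have dD_3: "\<bar>k' - k\<bar> \<le> D"
      unfolding D_def k'_def by linarith
    have dD_4: "\<bar>k - k\<bar> \<le> D"
      unfolding D_def k'_def by linarith
    note dD = dD_1 dD_2 dD_3 dD_4
    have b1: "K^2 * cmod e1 \<le> real_of_int \<bar>k - j\<bar> * (RD * ((9/4) * B2))"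
      unfolding e1_def dk_def K_def RD_def using gg_bound[OF dD(1) dD(4) kD] .
    have b2: "K^2 * cmod e2 \<le> real_of_int \<bar>l - k\<bar> * (RD * ((9/4) * B2))"
      unfolding e2_def dk_def K_def RD_def using gg_bound[OF dD(4) dD(2) kD] .
    have b3: "K^2 * cmod e3 \<le> real_of_int \<bar>k' - j\<bar> * (RD * ((9/4) * B2))"
      unfolding e3_def dk_def K_def RD_def using gg_bound[OF dD(1) dD(3) kD] .
    have b4: "K^2 * cmod e4 \<le> real_of_int \<bar>l - k'\<bar> * (RD * ((9/4) * B2))"
      unfolding e4_def dk_def K_def RD_def using gg_bound[OF dD(3) dD(2) kD] .
    have s12_1: "real_of_int \<bar>k - j\<bar> + real_of_int \<bar>l - k\<bar> = RD"
      unfolding RD_def D_def k'_def by (simp; smt (verit))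
    have s12_2: "real_of_int \<bar>k' - j\<bar> + real_of_int \<bar>l - k'\<bar> = RD"
      unfolding RD_def D_def k'_def by (simp; smt (verit))
    note s12 = s12_1 s12_2
    have RC: "RD * ((9/4) * B2) \<ge> 0" using RD1 C20 by simp
    have b12: "K^2 * cmod (e1 - e2) \<le> RD * (RD * ((9/4) * B2))"
    proof -
      have "K^2 * cmod (e1 - e2) \<le> K^2 * cmod e1 + K^2 * cmod e2"
        using mult_left_mono[OF norm_triangle_ineq4[of e1 e2], of "K^2"] by (simp add: distrib_left)
      also have "\<dots> \<le> (real_of_int \<bar>k - j\<bar> + real_of_int \<bar>l - k\<bar>) * (RD * ((9/4) * B2))"
        using b1 b2 by (simp add: distrib_right)
      finally show ?thesis using s12 by simp
    qed
    have b34: "K^2 * cmod (e3 - e4) \<le> RD * (RD * ((9/4) * B2))"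
    proof -
      have "K^2 * cmod (e3 - e4) \<le> K^2 * cmod e3 + K^2 * cmod e4"
        using mult_left_mono[OF norm_triangle_ineq4[of e3 e4], of "K^2"] by (simp add: distrib_left)
      also have "\<dots> \<le> (real_of_int \<bar>k' - j\<bar> + real_of_int \<bar>l - k'\<bar>) * (RD * ((9/4) * B2))"
        using b3 b4 by (simp add: distrib_right)
      finally show ?thesis using s12 by simp
    qed
    have p1_1: "real_of_int \<bar>j+k\<bar> \<le> (7/3) * \<bar>K\<bar>"
      using kDR unfolding K_def RD_def D_def k'_def by (simp; smt (verit))
    have p1_2: "real_of_int \<bar>k+l\<bar> \<le> (7/3) * \<bar>K\<bar>"
      using kDR unfolding K_def RD_def D_def k'_def by (simp; smt (verit))
    have p1_3: "real_of_int \<bar>j+k'\<bar> \<le> (8/3) * \<bar>K\<bar>"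
      using kDR unfolding K_def RD_def D_def k'_def by (simp; smt (verit))
    have p1_4: "real_of_int \<bar>k'+l\<bar> \<le> (8/3) * \<bar>K\<bar>"
      using kDR unfolding K_def RD_def D_def k'_def by (simp; smt (verit))
    have p1_5: "real_of_int \<bar>j+l\<bar> \<le> (7/3) * \<bar>K\<bar>"
      using kDR unfolding K_def RD_def D_def k'_def by (simp; smt (verit))
    have p1_6: "real_of_int \<bar>2*k-j-l\<bar> \<le> RD"
      using kDR unfolding K_def RD_def D_def k'_def by (simp; smt (verit))
    note p1 = p1_1 p1_2 p1_3 p1_4 p1_5 p1_6
    have t1: "K^2 * cmod (of_int (2*(j+l)*(2*k-j-l)^2) * dk) \<le> K^2 * (RD^2 * ((14/3) * B1))"
    proof -
      have "K^2 * cmod (of_int (2*(j+l)*(2*k-j-l)^2) * dk)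
          = (2 * real_of_int \<bar>j+l\<bar>) * (real_of_int \<bar>2*k-j-l\<bar>)^2 * \<bar>K\<bar> * (\<bar>K\<bar> * cmod dk)"
        unfolding cmod_of_int_mult Ksq by (simp add: power_abs abs2 power2_eq_square)
      also have "\<dots> \<le> (2 * ((7/3) * \<bar>K\<bar>)) * RD^2 * \<bar>K\<bar> * B1"
      proof -
        have "\<bar>K\<bar> * cmod dk \<le> B1" using B1[of k] unfolding K_def dk_def by (simp add: norm_mult)
        moreover have "(real_of_int \<bar>2*k-j-l\<bar>)^2 \<le> RD^2" using p1(6) by (intro power_mono) auto
        ultimately show ?thesis using p1(5)
          by (intro mm mult_nonneg_nonneg) auto
      qed
      also have "\<dots> = K^2 * (RD^2 * ((14/3) * B1))" by (simp add: power2_eq_square)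
      finally show ?thesis .
    qed
    have t2: "K^2 * cmod (of_int ((j+k)*(k+l)) * (e1 - e2)) \<le> K^2 * (RD^2 * ((49/4) * B2))"
    proof -
      have "K^2 * cmod (of_int ((j+k)*(k+l)) * (e1 - e2))
          = (real_of_int \<bar>j+k\<bar> * real_of_int \<bar>k+l\<bar>) * (K^2 * cmod (e1 - e2))"
        unfolding cmod_of_int_mult by simp
      also have "\<dots> \<le> (((7/3) * \<bar>K\<bar>) * ((7/3) * \<bar>K\<bar>)) * (RD * (RD * ((9/4) * B2)))"
        by (intro mm mult_nonneg_nonneg p1 b12) auto
      also have "\<dots> = K^2 * (RD^2 * ((49/4) * B2))" by (simp add: power2_eq_square)
      finally show ?thesis .
    qed
    have t3: "K^2 * cmod (of_int ((j+k')*(k'+l)) * (e3 - e4)) \<le> K^2 * (RD^2 * (16 * B2))"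
    proof -
      have "K^2 * cmod (of_int ((j+k')*(k'+l)) * (e3 - e4))
          = (real_of_int \<bar>j+k'\<bar> * real_of_int \<bar>k'+l\<bar>) * (K^2 * cmod (e3 - e4))"
        unfolding cmod_of_int_mult by simp
      also have "\<dots> \<le> (((8/3) * \<bar>K\<bar>) * ((8/3) * \<bar>K\<bar>)) * (RD * (RD * ((9/4) * B2)))"
        by (intro mm mult_nonneg_nonneg p1 b34) auto
      also have "\<dots> = K^2 * (RD^2 * (16 * B2))" by (simp add: power2_eq_square)
      finally show ?thesis .
    qed
    have "K^2 * cmod (?E k + ?E k') \<le> K^2 * (RD^2 * ((14/3) * B1)) + K^2 * (RD^2 * ((49/4) * B2))
         + K^2 * (RD^2 * (16 * B2))"
    proof -
      have "cmod (?E k + ?E k') \<le> cmod (of_int (2*(j+l)*(2*k-j-l)^2) * dk)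
         + cmod (of_int ((j+k)*(k+l)) * (e1 - e2)) + cmod (of_int ((j+k')*(k'+l)) * (e3 - e4))"
        unfolding ident
        by (rule order.trans[OF norm_triangle_ineq add_mono[OF norm_triangle_ineq order_refl]])
      hence "K^2 * cmod (?E k + ?E k') \<le> K^2 * (cmod (of_int (2*(j+l)*(2*k-j-l)^2) * dk)
         + cmod (of_int ((j+k)*(k+l)) * (e1 - e2)) + cmod (of_int ((j+k')*(k'+l)) * (e3 - e4)))"
        by (intro mult_left_mono) auto
      thus ?thesis using t1 t2 t3 by (simp only: distrib_left)
    qed
    also have "\<dots> = (K^2 * RD^2) * ((14/3) * B1 + (113/4) * B2)"
      by (simp add: algebra_simps)
    also have "\<dots> \<le> (K^2 * RD^2) * CE"
      unfolding CE_def using G0 C10 C20 by (intro mult_left_mono) auto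
    also have "\<dots> = K^2 * (CE * RD^2)" by simp
    finally have "cmod (?E k + ?E k') \<le> CE * RD^2" using K2pos by simp
    thus ?thesis unfolding RD_def D_def k'_def .
  qed
qed

lemma kap_bound:
  fixes j k :: int
  shows "real_of_int \<bar>j+k\<bar> * cmod (\<gamma> k - \<gamma> j) \<le> (14 * G + 4 * B1) * real_of_int \<bar>j-k\<bar>"
proof (cases "3 * \<bar>j-k\<bar> \<le> \<bar>k\<bar>")
  case True
  have jk: "\<bar>j - k\<bar> \<le> \<bar>j-k\<bar>" by simp
  have g1: "\<bar>real_of_int k\<bar> * cmod (\<gamma> k - \<gamma> j) \<le> real_of_int \<bar>j - k\<bar> * ((3/2) * B1)"
    by (rule gb1[OF jk True])
  have TR: "real_of_int (3 * \<bar>j-k\<bar>) \<le> real_of_int \<bar>k\<bar>" using True by (simp only: of_int_le_iff)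
  have p: "real_of_int \<bar>j+k\<bar> \<le> (7/3) * \<bar>real_of_int k\<bar>" using TR by (simp; smt (verit))
  have "real_of_int \<bar>j+k\<bar> * cmod (\<gamma> k - \<gamma> j) \<le> ((7/3) * \<bar>real_of_int k\<bar>) * cmod (\<gamma> k - \<gamma> j)"
    by (rule mult_right_mono[OF p]) simp
  also have "\<dots> = (7/3) * (\<bar>real_of_int k\<bar> * cmod (\<gamma> k - \<gamma> j))" by simp
  also have "\<dots> \<le> (7/3) * (real_of_int \<bar>j - k\<bar> * ((3/2) * B1))" using g1 by (rule mult_left_mono) simp
  also have "\<dots> \<le> (14 * G + 4 * B1) * real_of_int \<bar>j-k\<bar>" using G0 C10 by (simp add: algebra_simps)
  finally show ?thesis .
next
  case False
  have TR: "real_of_int \<bar>k\<bar> < real_of_int (3 * \<bar>j-k\<bar>)" using False by (simp only: of_int_less_iff not_le)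
  have p: "real_of_int \<bar>j+k\<bar> \<le> 7 * real_of_int \<bar>j-k\<bar>" using TR by (simp; smt (verit))
  have c: "cmod (\<gamma> k - \<gamma> j) \<le> 2 * G"
    using norm_triangle_ineq4[of "\<gamma> k" "\<gamma> j"] G[of k] G[of j] by linarith
  have "real_of_int \<bar>j+k\<bar> * cmod (\<gamma> k - \<gamma> j) \<le> (7 * real_of_int \<bar>j-k\<bar>) * (2 * G)"
    by (intro mm p c) auto
  also have "\<dots> \<le> (14 * G + 4 * B1) * real_of_int \<bar>j-k\<bar>" using G0 C10 by (simp add: algebra_simps)
  finally show ?thesis .
qed

end

locale stp = gam +
  fixes a :: real
  assumes a1: "a > 1"
begin

definition tau :: real where "tau = root 4 (inverse a)"
definition g :: "int \<Rightarrow> real" where "g n = tau ^ nat \<bar>n\<bar>"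
definition wt :: "int \<Rightarrow> real" where "wt n = tau ^ (4 * nat \<bar>n\<bar>)"
definition Lt :: real where "Lt = 1 / (1 - tau)"
definition cc :: "int \<Rightarrow> int \<Rightarrow> real" where
  "cc j k = (if j = k then 0 else wt (j - k) * real_of_int (j + k) / 2)"
definition ck :: "int \<Rightarrow> int \<Rightarrow> complex" where "ck j k = complex_of_real (cc j k)"
definition kap :: "int \<Rightarrow> int \<Rightarrow> complex" where "kap j k = ck j k * (\<gamma> k - \<gamma> j)"
definition kap2 :: "int \<Rightarrow> int \<Rightarrow> complex" where
  "kap2 j l = infsum (\<lambda>k. ck j k * kap k l - kap j k * ck k l) UNIV"
definition Ck :: real where "Ck = 14 * G + 4 * B1"
definition V0 :: "int \<Rightarrow> real" where "V0 n = (1 + Lt) * g n"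
definition Vk :: "int \<Rightarrow> real" where "Vk n = (Ck * Lt) * g n"
definition VkX :: "int \<Rightarrow> real" where "VkX n = (Ck * (Lt + Lt^2)) * g n"

lemma tau_pos: "tau > 0" unfolding tau_def using a1 by (simp add: real_root_gt_zero)
lemma tau_lt1: "tau < 1"
proof -
  have "inverse a < 1" using a1 by (simp add: inverse_eq_divide)
  thus ?thesis unfolding tau_def by simp
qed
lemma tau4: "tau ^ 4 = inverse a" unfolding tau_def using a1 by simp
lemma Lt_pos: "Lt > 0" unfolding Lt_def using tau_lt1 by simp
lemma Ck0: "Ck \<ge> 0" unfolding Ck_def using G0 C10 by simp
lemma g_nonneg: "g n \<ge> 0" unfolding g_def using tau_pos by simp
lemma wt_nonneg: "wt n \<ge> 0" unfolding wt_def using tau_pos by simp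
lemma g_sym: "g (j - k) = g (k - j)" unfolding g_def by (simp add: abs_minus_commute)
lemma wt_sym: "wt (j - k) = wt (k - j)" unfolding wt_def by (simp add: abs_minus_commute)

lemma g_kern: "c \<ge> 0 \<Longrightarrow> kern (\<lambda>n. c * g n)"
  unfolding g_def using tau_pos tau_lt1 by (intro geo_kern) auto

lemma wt_eq: "a powr (- real_of_int \<bar>m\<bar>) = wt m"
proof -
  have e: "real_of_int \<bar>m\<bar> = real (nat \<bar>m\<bar>)" by simp
  have "a powr (- real_of_int \<bar>m\<bar>) = inverse (a powr (real (nat \<bar>m\<bar>)))"
    unfolding e by (rule powr_minus)
  also have "a powr (real (nat \<bar>m\<bar>)) = a ^ nat \<bar>m\<bar>" using a1 by (intro powr_realpow) simp
  finally have "a powr (- real_of_int \<bar>m\<bar>) = inverse (a ^ nat \<bar>m\<bar>)" .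
  also have "\<dots> = (tau ^ 4) ^ nat \<bar>m\<bar>" by (simp add: tau4 power_inverse)
  also have "\<dots> = wt m" unfolding wt_def by (simp add: power_mult)
  finally show ?thesis .
qed

lemma pd0: "real d * tau ^ d \<le> Lt"
  unfolding Lt_def using tau_pos tau_lt1 by (intro dpow) auto

lemma tpow_mono: "d1 \<le> d2 \<Longrightarrow> tau ^ d2 \<le> tau ^ d1"
  using tau_pos tau_lt1 by (intro power_decreasing) auto

lemma pb: "real d * tau ^ (4*d) \<le> Lt * tau ^ d"
proof -
  have "real d * tau ^ (4*d) \<le> real d * (tau ^ d * tau ^ d)"
    by (intro mult_left_mono) (auto simp: power_add[symmetric] intro: tpow_mono)
  also have "\<dots> = (real d * tau ^ d) * tau ^ d" by simp
  also have "\<dots> \<le> Lt * tau ^ d" by (intro mult_right_mono pd0) (use tau_pos in auto)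
  finally show ?thesis .
qed

lemma pa: "tau ^ (4*d) * (1 + real d) \<le> (1 + Lt) * tau ^ d"
proof -
  have "tau ^ (4*d) \<le> tau ^ d" by (rule tpow_mono) simp
  thus ?thesis using pb[of d] by (simp add: algebra_simps)
qed

lemma pc: "(real d)^2 * tau ^ (4*d) \<le> Lt^2 * tau ^ d"
proof -
  have "(real d)^2 * tau ^ (4*d) \<le> (real d)^2 * (tau ^ d * tau ^ d * tau ^ d)"
    by (intro mult_left_mono) (auto simp: power_add[symmetric] intro: tpow_mono)
  also have "\<dots> = (real d * tau ^ d) * (real d * tau ^ d) * tau ^ d" by (simp add: power2_eq_square)
  also have "\<dots> \<le> Lt * Lt * tau ^ d"
    by (intro mult_right_mono mm pd0) (use tau_pos in auto)
  finally show ?thesis by (simp add: power2_eq_square)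
qed

lemma pdD: "(real d)^2 * tau ^ (4*d) \<le> Lt^2 * tau ^ (2*d)"
proof -
  have e: "tau ^ (4*d) = tau ^ d * tau ^ d * tau ^ (2*d)"
  proof -
    have "tau ^ (4*d) = tau ^ (d + d + 2*d)" by (rule arg_cong[where f="power tau"]) simp
    thus ?thesis by (simp only: power_add)
  qed
  have "(real d)^2 * tau ^ (4*d) = (real d * tau ^ d) * (real d * tau ^ d) * tau ^ (2*d)"
    unfolding e by (simp add: power2_eq_square)
  also have "\<dots> \<le> Lt * Lt * tau ^ (2*d)"
    by (intro mult_right_mono mm pd0) (use tau_pos in auto)
  finally show ?thesis by (simp add: power2_eq_square)
qed

lemma cc_sym: "cc j k = cc k j"
  unfolding cc_def by (simp add: wt_sym add.commute)

lemma cmod_ck: "cmod (ck j k) = \<bar>cc j k\<bar>"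
  unfolding ck_def by simp

lemma cc_abs: "j \<noteq> k \<Longrightarrow> \<bar>cc j k\<bar> = wt (j - k) / 2 * real_of_int \<bar>j + k\<bar>"
  unfolding cc_def by (simp add: abs_mult wt_nonneg)

lemma cc_bd: "\<bar>cc j k\<bar> \<le> V0 (j - k) * (1 + real_of_int \<bar>k\<bar>)"
proof (cases "j = k")
  case True thus ?thesis by (simp add: cc_def V0_def Lt_pos g_nonneg less_imp_le)
next
  case False
  define d where "d = nat \<bar>j - k\<bar>"
  have dd: "real d = real_of_int \<bar>j - k\<bar>" unfolding d_def by simp
  have "\<bar>cc j k\<bar> = wt (j - k) * (real_of_int \<bar>j + k\<bar> / 2)"
    using False by (simp add: cc_def abs_mult wt_nonneg)
  also have "\<dots> \<le> wt (j - k) * ((1 + real d) * (1 + real_of_int \<bar>k\<bar>))"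
  proof (rule mult_left_mono[OF _ wt_nonneg])
    have "real_of_int \<bar>j + k\<bar> \<le> 2 * real_of_int \<bar>k\<bar> + real d" unfolding dd by (simp; smt (verit))
    moreover have "(1 + real d) * (1 + real_of_int \<bar>k\<bar>) = 1 + real d + real_of_int \<bar>k\<bar> + real d * real_of_int \<bar>k\<bar>"
      by (simp add: algebra_simps)
    moreover have "real d * real_of_int \<bar>k\<bar> \<ge> 0" by simp
    moreover have "real d \<ge> 0" "real_of_int \<bar>k\<bar> \<ge> 0" by simp_all
    ultimately have h: "real_of_int \<bar>j + k\<bar> / 2 \<le> 1 + real d + real_of_int \<bar>k\<bar> + real d * real_of_int \<bar>k\<bar>"
      by linarith
    have e: "(1 + real d) * (1 + real_of_int \<bar>k\<bar>) = 1 + real d + real_of_int \<bar>k\<bar> + real d * real_of_int \<bar>k\<bar>"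
      by (simp add: algebra_simps)
    show "real_of_int \<bar>j + k\<bar> / 2 \<le> (1 + real d) * (1 + real_of_int \<bar>k\<bar>)" unfolding e by (rule h)
  qed
  also have "\<dots> = (wt (j - k) * (1 + real d)) * (1 + real_of_int \<bar>k\<bar>)" by simp
  also have "\<dots> \<le> V0 (j - k) * (1 + real_of_int \<bar>k\<bar>)"
    by (rule mult_right_mono) (use pa[of d] in \<open>simp_all add: wt_def V0_def g_def d_def\<close>)
  finally show ?thesis .
qed

lemma cc_bd': "\<bar>cc j k\<bar> \<le> V0 (j - k) * (1 + real_of_int \<bar>j\<bar>)"
  using cc_bd[of k j] by (simp add: cc_sym V0_def g_sym)

lemma kap_bd: "cmod (kap j k) \<le> Vk (j - k)"
proof (cases "j = k")
  case True thus ?thesis by (simp add: kap_def ck_def cc_def Vk_def Ck0 Lt_pos g_nonneg less_imp_le)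
next
  case False
  define d where "d = nat \<bar>j - k\<bar>"
  have dd: "real d = real_of_int \<bar>j - k\<bar>" unfolding d_def by simp
  have "cmod (kap j k) = wt (j - k) / 2 * (real_of_int \<bar>j + k\<bar> * cmod (\<gamma> k - \<gamma> j))"
    unfolding kap_def norm_mult cmod_ck cc_abs[OF False] by simp
  also have "\<dots> \<le> wt (j - k) / 2 * (Ck * real d)"
    by (rule mult_left_mono) (use kap_bound[of j k] wt_nonneg in \<open>simp_all add: dd Ck_def\<close>)
  also have "\<dots> = (Ck / 2) * (real d * tau ^ (4*d))" by (simp add: wt_def d_def)
  also have "\<dots> \<le> (Ck / 2) * (Lt * tau ^ d)" by (intro mult_left_mono pb) (use Ck0 in auto)
  also have "\<dots> \<le> Vk (j - k)" unfolding Vk_def g_def d_def using Ck0 Lt_pos tau_pos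
    by (simp add: mult.assoc)
  finally show ?thesis .
qed

lemma kapX_bd: "real_of_int \<bar>j\<bar> * cmod (kap j k) \<le> VkX (j - k) * (1 + real_of_int \<bar>k\<bar>)"
proof (cases "j = k")
  case True thus ?thesis by (simp add: kap_def ck_def cc_def VkX_def Ck0 Lt_pos g_nonneg less_imp_le)
next
  case False
  define d where "d = nat \<bar>j - k\<bar>"
  have dd: "real d = real_of_int \<bar>j - k\<bar>" unfolding d_def by simp
  have j: "real_of_int \<bar>j\<bar> \<le> real_of_int \<bar>k\<bar> + real d" unfolding dd by (simp; smt (verit))
  have c: "cmod (kap j k) \<le> wt (j - k) / 2 * (Ck * real d)"
  proof -
    have "cmod (kap j k) = wt (j - k) / 2 * (real_of_int \<bar>j + k\<bar> * cmod (\<gamma> k - \<gamma> j))"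
      unfolding kap_def norm_mult cmod_ck cc_abs[OF False] by simp
    also have "\<dots> \<le> wt (j - k) / 2 * (Ck * real d)"
      by (rule mult_left_mono) (use kap_bound[of j k] wt_nonneg in \<open>simp_all add: dd Ck_def\<close>)
    finally show ?thesis .
  qed
  have "real_of_int \<bar>j\<bar> * cmod (kap j k) \<le> (real_of_int \<bar>k\<bar> + real d) * (wt (j - k) / 2 * (Ck * real d))"
    by (intro mm j c) (auto simp: wt_nonneg)
  also have "\<dots> = (Ck / 2) * (real_of_int \<bar>k\<bar> * (real d * tau ^ (4*d)) + (real d)^2 * tau ^ (4*d))"
  proof -
    have wd: "wt (j - k) = tau ^ (4*d)" unfolding wt_def d_def ..
    show ?thesis unfolding wd by (simp add: algebra_simps power2_eq_square)
  qed
  also have "\<dots> \<le> (Ck / 2) * (real_of_int \<bar>k\<bar> * (Lt * tau ^ d) + Lt^2 * tau ^ d)"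
    by (intro mult_left_mono add_mono pc mult_left_mono pb) (use Ck0 in auto)
  also have "\<dots> \<le> VkX (j - k) * (1 + real_of_int \<bar>k\<bar>)"
  proof -
    have "real_of_int \<bar>k\<bar> * (Lt * tau ^ d) + Lt^2 * tau ^ d \<le> (Lt + Lt^2) * tau ^ d * (1 + real_of_int \<bar>k\<bar>)"
      using Lt_pos tau_pos by (simp add: algebra_simps)
    hence "(Ck / 2) * (real_of_int \<bar>k\<bar> * (Lt * tau ^ d) + Lt^2 * tau ^ d)
          \<le> (Ck / 2) * ((Lt + Lt^2) * tau ^ d * (1 + real_of_int \<bar>k\<bar>))"
      by (intro mult_left_mono) (use Ck0 in auto)
    also have "\<dots> \<le> Ck * ((Lt + Lt^2) * tau ^ d * (1 + real_of_int \<bar>k\<bar>))"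
      using Ck0 Lt_pos tau_pos by (intro mult_right_mono) auto
    finally show ?thesis unfolding VkX_def g_def d_def by (simp add: mult.assoc)
  qed
  finally show ?thesis .
qed

end

context stp begin

definition Sg :: real where "Sg = infsum g UNIV"
definition V2 :: "int \<Rightarrow> real" where "V2 n = (CE * Lt^2 * Sg / 8) * g n"

lemma CE0: "CE \<ge> 0" unfolding CE_def using G0 C10 C20 by simp
lemma g_le1: "g n \<le> 1" unfolding g_def using tau_pos tau_lt1 by (simp add: power_le_one)
lemma g_summ: "g summable_on UNIV" using kern_summ[OF g_kern[of 1]] by simp
lemma Sg0: "Sg \<ge> 0" unfolding Sg_def by (rule infsum_nonneg) (rule g_nonneg)

lemma F_eq: "ck j k * kap k l - kap j k * ck k l = complex_of_real (cc j k * cc k l) * (\<gamma> j - 2 * \<gamma> k + \<gamma> l)"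
  unfolding kap_def ck_def by (simp add: algebra_simps)

lemma F_summ: "(\<lambda>k. ck j k * kap k l - kap j k * ck k l) summable_on UNIV"
proof -
  define c where "c = (1 + Lt) * (1 + real_of_int \<bar>j\<bar>) * ((1 + Lt) * (1 + real_of_int \<bar>l\<bar>)) * (4 * G)"
  have c0: "c \<ge> 0" unfolding c_def using Lt_pos G0 by simp
  show ?thesis unfolding summable_on_iff_abs_summable_on_complex
  proof (rule summable_on_comparison_test)
    show "(\<lambda>k. c * g (j - k)) summable_on UNIV"
      by (rule summable_on_cmult_right, rule shift_summable, rule g_summ)
    fix k assume "k \<in> (UNIV :: int set)"
    have "norm (ck j k * kap k l - kap j k * ck k l) = \<bar>cc j k\<bar> * \<bar>cc k l\<bar> * cmod (\<gamma> j - 2 * \<gamma> k + \<gamma> l)"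
      unfolding F_eq by (simp add: norm_mult abs_mult)
    also have "\<dots> \<le> (V0 (j - k) * (1 + real_of_int \<bar>j\<bar>)) * ((1 + Lt) * (1 + real_of_int \<bar>l\<bar>)) * (4 * G)"
    proof (intro mm mult_nonneg_nonneg cc_bd' tri4)
      have "\<bar>cc k l\<bar> \<le> V0 (k - l) * (1 + real_of_int \<bar>l\<bar>)" by (rule cc_bd)
      also have "\<dots> \<le> (1 + Lt) * (1 + real_of_int \<bar>l\<bar>)"
        unfolding V0_def using g_le1[of "k - l"] Lt_pos by (intro mult_right_mono) auto
      finally show "\<bar>cc k l\<bar> \<le> (1 + Lt) * (1 + real_of_int \<bar>l\<bar>)" .
    qed auto
    also have "\<dots> = c * g (j - k)" unfolding c_def V0_def by (simp add: algebra_simps)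
    finally show "norm (ck j k * kap k l - kap j k * ck k l) \<le> c * g (j - k)" .
  qed auto
qed

lemma pair_bound:
  fixes j k l :: int
  shows "cmod ((ck j k * kap k l - kap j k * ck k l)
            + (ck j (j+l-k) * kap (j+l-k) l - kap j (j+l-k) * ck (j+l-k) l))
         \<le> (CE / 4) * Lt^2 * (g (j - l) * g (j - k))"
proof (cases "k = j \<or> k = l")
  case True
  hence "cc j k * cc k l = 0" "cc j (j+l-k) * cc (j+l-k) l = 0" by (auto simp: cc_def)
  hence z: "ck j k * kap k l - kap j k * ck k l = 0"
    "ck j (j+l-k) * kap (j+l-k) l - kap j (j+l-k) * ck (j+l-k) l = 0"
    unfolding F_eq by simp_all
  show ?thesis unfolding z using CE0 Lt_pos g_nonneg by (simp add: mult_nonneg_nonneg)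
next
  case False
  hence kj: "k \<noteq> j" and kl: "k \<noteq> l" by auto
  define k' where "k' = j + l - k"
  have k'j: "k' \<noteq> j" and k'l: "k' \<noteq> l" using kj kl unfolding k'_def by auto
  define dn where "dn = nat \<bar>j - k\<bar> + nat \<bar>k - l\<bar>"
  define W where "W = wt (j - k) * wt (k - l)"
  have W: "W = tau ^ (4 * dn)" unfolding W_def wt_def dn_def by (simp add: power_add distrib_left)
  have c1: "cc j k * cc k l = W / 4 * real_of_int ((j+k)*(k+l))"
    unfolding cc_def W_def using kj kl by simp
  have c2: "cc j k' * cc k' l = W / 4 * real_of_int ((j+k')*(k'+l))"
  proof -
    have e1: "wt (j - k') = wt (k - l)" unfolding k'_def by (simp add: algebra_simps)
    have e2: "wt (k' - l) = wt (j - k)" unfolding k'_def by (simp add: algebra_simps)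
    show ?thesis unfolding cc_def W_def using k'j k'l by (simp add: e1 e2)
  qed
  have sumeq: "(ck j k * kap k l - kap j k * ck k l) + (ck j k' * kap k' l - kap j k' * ck k' l)
      = complex_of_real (W / 4) * (of_int ((j+k)*(k+l)) * (\<gamma> j - 2*\<gamma> k + \<gamma> l)
             + of_int ((j+k')*(k'+l)) * (\<gamma> j - 2*\<gamma> k' + \<gamma> l))"
  proof -
    have f1: "ck j k * kap k l - kap j k * ck k l
        = complex_of_real (W / 4) * (of_int ((j+k)*(k+l)) * (\<gamma> j - 2*\<gamma> k + \<gamma> l))"
      unfolding F_eq c1 of_real_mult of_real_of_int_eq by (simp only: mult.assoc)
    have f2: "ck j k' * kap k' l - kap j k' * ck k' l
        = complex_of_real (W / 4) * (of_int ((j+k')*(k'+l)) * (\<gamma> j - 2*\<gamma> k' + \<gamma> l))"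
      unfolding F_eq c2 of_real_mult of_real_of_int_eq by (simp only: mult.assoc)
    show ?thesis unfolding f1 f2 by (simp only: distrib_left)
  qed
  have EB: "cmod (of_int ((j+k)*(k+l)) * (\<gamma> j - 2*\<gamma> k + \<gamma> l)
             + of_int ((j+k')*(k'+l)) * (\<gamma> j - 2*\<gamma> k' + \<gamma> l))
       \<le> CE * (real_of_int (\<bar>j-k\<bar> + \<bar>k-l\<bar>))^2"
    using E_bound[OF kj, of l] unfolding k'_def .
  have W0: "W \<ge> 0" unfolding W using tau_pos by simp
  have "cmod ((ck j k * kap k l - kap j k * ck k l) + (ck j k' * kap k' l - kap j k' * ck k' l))
      \<le> (W / 4) * (CE * (real_of_int (\<bar>j-k\<bar> + \<bar>k-l\<bar>))^2)"
    unfolding sumeq norm_mult norm_of_real using W0 EB by (simp add: mult_left_mono)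
  also have "\<dots> = (CE / 4) * ((real dn)^2 * tau ^ (4 * dn))" unfolding W dn_def by simp
  also have "\<dots> \<le> (CE / 4) * (Lt^2 * tau ^ (2 * dn))" by (intro mult_left_mono pdD) (use CE0 in auto)
  also have "tau ^ (2 * dn) \<le> g (j - l) * g (j - k)"
  proof -
    have "tau ^ (2 * dn) = tau ^ dn * tau ^ dn" by (simp add: mult_2 power_add)
    also have "\<dots> \<le> g (j - l) * g (j - k)" unfolding g_def
      by (intro mult_mono tpow_mono) (auto simp: dn_def tau_pos less_imp_le)
    finally show ?thesis .
  qed
  hence "(CE / 4) * (Lt^2 * tau ^ (2 * dn)) \<le> (CE / 4) * (Lt^2 * (g (j - l) * g (j - k)))"
    by (intro mult_left_mono) (use CE0 in auto)
  finally show ?thesis unfolding k'_def by (simp add: mult.assoc)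
qed

lemma kap2_bd: "cmod (kap2 j l) \<le> V2 (j - l)"
proof -
  let ?F = "\<lambda>k. ck j k * kap k l - kap j k * ck k l"
  let ?F' = "\<lambda>k. ?F (j + l - k)"
  have S: "?F summable_on UNIV" by (rule F_summ)
  have S': "?F' summable_on UNIV"
  proof -
    have "?F' summable_on UNIV \<longleftrightarrow> ?F summable_on UNIV"
      by (rule summable_on_reindex_bij_witness[where i="\<lambda>k. j + l - k" and j="\<lambda>k. j + l - k"]) auto
    thus ?thesis using S by simp
  qed
  have r: "infsum ?F' UNIV = infsum ?F UNIV"
    by (rule infsum_reindex_bij_witness[where i="\<lambda>k. j + l - k" and j="\<lambda>k. j + l - k"]) auto
  have "2 * kap2 j l = infsum (\<lambda>k. ?F k + ?F' k) UNIV"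
    unfolding kap2_def using infsum_add[OF S S'] r by simp
  hence "2 * cmod (kap2 j l) = cmod (infsum (\<lambda>k. ?F k + ?F' k) UNIV)"
    by (metis norm_mult norm_numeral of_real_numeral)
  also have "\<dots> \<le> infsum (\<lambda>k. (CE / 4) * Lt^2 * g (j - l) * g (j - k)) UNIV"
  proof (rule norm_infsum_le)
    show "((\<lambda>k. ?F k + ?F' k) has_sum infsum (\<lambda>k. ?F k + ?F' k) UNIV) UNIV"
      by (rule has_sum_infsum, rule summable_on_add[OF S S'])
    show "((\<lambda>k. (CE / 4) * Lt^2 * g (j - l) * g (j - k)) has_sum
            infsum (\<lambda>k. (CE / 4) * Lt^2 * g (j - l) * g (j - k)) UNIV) UNIV"
      by (rule has_sum_infsum, rule summable_on_cmult_right, rule shift_summable, rule g_summ)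
    fix k show "norm (?F k + ?F' k) \<le> (CE / 4) * Lt^2 * g (j - l) * g (j - k)"
      using pair_bound[of j k l] by (simp add: mult.assoc)
  qed
  also have "\<dots> = (CE / 4) * Lt^2 * g (j - l) * Sg"
    unfolding Sg_def by (simp only: infsum_cmult_right' shift_infsum)
  finally show ?thesis unfolding V2_def by (simp add: algebra_simps)
qed

end

lemma row_bound:
  assumes V: "kern V" and h: "l2 h" and F: "\<And>k. cmod (F k) \<le> V (j - k) * cmod (h k)"
  shows "F summable_on UNIV" and "cmod (infsum F UNIV) \<le> convsum V h j"
proof -
  have S: "(\<lambda>k. norm (F k)) summable_on UNIV"
    by (rule summable_on_comparison_test[OF conv_summable[OF V h, of j]]) (use F in auto)
  thus "F summable_on UNIV" by (simp add: summable_on_iff_abs_summable_on_complex)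
  have "cmod (infsum F UNIV) \<le> infsum (\<lambda>k. norm (F k)) UNIV"
    by (rule norm_infsum_bound) (use S in simp)
  also have "\<dots> \<le> convsum V h j" unfolding convsum_def
    by (rule infsum_mono[OF S conv_summable[OF V h]]) (use F in auto)
  finally show "cmod (infsum F UNIV) \<le> convsum V h j" .
qed

lemma convsum_le:
  assumes V: "kern V" and h: "l2 h"
  shows "convsum V h k \<le> infsum V UNIV * l2norm h"
proof -
  have "convsum V h k \<le> infsum (\<lambda>l. V (k - l) * l2norm h) UNIV" unfolding convsum_def
    by (rule infsum_mono[OF conv_summable[OF V h] summable_on_cmult_left[OF shift_summable[OF kern_summ[OF V]]]])
       (use V h in \<open>auto intro!: mult_left_mono l2_pt kern_nonneg\<close>)
  also have "\<dots> = infsum V UNIV * l2norm h" by (simp add: infsum_cmult_left' shift_infsum)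
  finally show ?thesis .
qed

lemma Bil:
  assumes V: "kern V" and h: "l2 h" and u: "l2 u"
    and F: "\<And>k j. cmod (F k j) \<le> V (k - j) * cmod (h j) * cmod (u k)"
  shows "(\<lambda>(k, j). F k j) summable_on UNIV \<times> UNIV"
proof -
  have B: "(\<lambda>(k, j). V (k - j) * cmod (h j) * cmod (u k)) summable_on Sigma UNIV (\<lambda>_. UNIV)"
  proof (rule summable_on_SigmaI[where g="\<lambda>k. convsum V h k * cmod (u k)"])
    fix k :: int
    show "((\<lambda>j. case (k, j) of (k, j) \<Rightarrow> V (k - j) * cmod (h j) * cmod (u k)) has_sum convsum V h k * cmod (u k)) UNIV"
      unfolding convsum_def using has_sum_cmult_left[OF has_sum_infsum[OF conv_summable[OF V h, of k]], of "cmod (u k)"]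
      by simp
    have "(\<lambda>k. cmod (complex_of_real (convsum V h k)) * cmod (u k)) summable_on UNIV"
      by (rule l2_CS(1)[OF conv_l2(1)[OF V h] u])
    thus "(\<lambda>k. convsum V h k * cmod (u k)) summable_on UNIV"
      using convsum_nonneg[OF V] by simp
  qed (auto intro!: mult_nonneg_nonneg kern_nonneg[OF V])
  have "(\<lambda>x. norm (case x of (k, j) \<Rightarrow> F k j)) summable_on UNIV \<times> UNIV"
  proof (rule summable_on_comparison_test[OF B])
    fix x :: "int \<times> int"
    show "norm (case x of (k, j) \<Rightarrow> F k j) \<le> (case x of (k, j) \<Rightarrow> V (k - j) * cmod (h j) * cmod (u k))"
      by (cases x) (use F in auto)
  qed auto
  thus ?thesis unfolding summable_on_iff_abs_summable_on_complex by simp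
qed

lemma Tri:
  assumes V: "kern V" and W: "kern W" and h: "l2 h" and c: "c \<ge> 0"
    and F: "\<And>k l. cmod (F k l) \<le> c * V (j - k) * W (k - l) * cmod (h l)"
  shows "(\<lambda>(k, l). F k l) summable_on UNIV \<times> UNIV"
proof -
  have B: "(\<lambda>(k, l). c * V (j - k) * W (k - l) * cmod (h l)) summable_on Sigma UNIV (\<lambda>_. UNIV)"
  proof (rule summable_on_SigmaI[where g="\<lambda>k. c * V (j - k) * convsum W h k"])
    fix k :: int
    show "((\<lambda>l. case (k, l) of (k, l) \<Rightarrow> c * V (j - k) * W (k - l) * cmod (h l)) has_sum c * V (j - k) * convsum W h k) UNIV"
      unfolding convsum_def using has_sum_cmult_right[OF has_sum_infsum[OF conv_summable[OF W h, of k]], of "c * V (j - k)"]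
      by (simp add: mult.assoc)
    show "(\<lambda>k. c * V (j - k) * convsum W h k) summable_on UNIV"
    proof (rule summable_on_comparison_test)
      show "(\<lambda>k. c * V (j - k) * (infsum W UNIV * l2norm h)) summable_on UNIV"
        by (intro summable_on_cmult_left summable_on_cmult_right shift_summable kern_summ[OF V])
      fix k
      show "c * V (j - k) * convsum W h k \<le> c * V (j - k) * (infsum W UNIV * l2norm h)"
        by (intro mult_left_mono convsum_le W h mult_nonneg_nonneg c kern_nonneg[OF V])
      show "0 \<le> c * V (j - k) * convsum W h k"
        by (intro mult_nonneg_nonneg c kern_nonneg[OF V] convsum_nonneg[OF W])
    qed
  qed (auto intro!: mult_nonneg_nonneg kern_nonneg[OF V] kern_nonneg[OF W] c)
  have "(\<lambda>x. norm (case x of (k, l) \<Rightarrow> F k l)) summable_on UNIV \<times> UNIV"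
  proof (rule summable_on_comparison_test[OF B])
    fix x :: "int \<times> int"
    show "norm (case x of (k, l) \<Rightarrow> F k l) \<le> (case x of (k, l) \<Rightarrow> c * V (j - k) * W (k - l) * cmod (h l))"
      by (cases x) (use F in auto)
  qed auto
  thus ?thesis unfolding summable_on_iff_abs_summable_on_complex by simp
qed

context stp begin

lemma A0_eq: "A0 a f = kop ck f"
proof
  fix k
  have "A0 a f k = infsum (\<lambda>m. (1/2) * (complex_of_real (a powr (- real_of_int \<bar>m\<bar>)) *
                 (Tpow m (Xop f) k + Xop (Tpow m f) k))) {m. m \<noteq> 0}"
    unfolding A0_def by (simp only: infsum_cmult_right')
  also have "\<dots> = infsum (\<lambda>j. (1/2) * (complex_of_real (a powr (- real_of_int \<bar>k - j\<bar>)) *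
                 (Tpow (k - j) (Xop f) k + Xop (Tpow (k - j) f) k))) {j. j \<noteq> k}"
    by (rule infsum_reindex_bij_witness[where i="\<lambda>m. k - m" and j="\<lambda>j. k - j"]) auto
  also have "\<dots> = infsum (\<lambda>j. ck k j * f j) UNIV"
  proof (rule infsum_cong_neutral)
    fix j assume "j \<in> UNIV - {j. j \<noteq> k}"
    thus "ck k j * f j = 0" by (simp add: ck_def cc_def)
  next
    fix j assume "j \<in> {j. j \<noteq> k} \<inter> UNIV"
    hence jk: "k \<noteq> j" by simp
    show "(1/2) * (complex_of_real (a powr (- real_of_int \<bar>k - j\<bar>)) *
                 (Tpow (k - j) (Xop f) k + Xop (Tpow (k - j) f) k)) = ck k j * f j"
      unfolding wt_eq ck_def cc_def Tpow_def Xop_def using jk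
      by (simp add: algebra_simps)
  qed auto
  finally show "A0 a f k = kop ck f k" unfolding kop_def .
qed

definition hX :: "vec \<Rightarrow> vec" where
  "hX f = (\<lambda>k. complex_of_real (cmod (f k) + cmod (of_int k * f k)))"

lemma hX_l2: "f \<in> domX \<Longrightarrow> l2 (hX f)"
  unfolding hX_def domX_def
proof -
  assume "f \<in> {f. l2 f \<and> l2 (Xop f)}"
  hence f: "l2 f" "l2 (Xop f)" by auto
  have "l2 (\<lambda>k. complex_of_real (cmod (f k)) + complex_of_real (cmod (Xop f k)))"
    by (intro l2_add l2_cmod f)
  thus "l2 (\<lambda>k. complex_of_real (cmod (f k) + cmod (of_int k * f k)))" by (simp add: Xop_def)
qed

lemma domX_l2: "f \<in> domX \<Longrightarrow> l2 f" by (simp add: domX_def)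

lemma V0_kern: "kern V0"
  unfolding V0_def[abs_def] using Lt_pos by (intro g_kern) simp

lemma Vk_kern: "kern Vk"
  unfolding Vk_def[abs_def] using Lt_pos Ck0 by (intro g_kern) simp

lemma VkX_kern: "kern VkX"
  unfolding VkX_def[abs_def] using Lt_pos Ck0 by (intro g_kern) simp

lemma V2_kern: "kern V2"
  unfolding V2_def[abs_def] using Lt_pos CE0 Sg0 by (intro g_kern) simp

lemma hX_cmod: "cmod (hX f k) = cmod (f k) + cmod (of_int k * f k)"
  unfolding hX_def norm_of_real by (rule abs_of_nonneg) simp

lemma cnj_ck: "cnj (ck k j) = ck j k"
  unfolding ck_def by (simp add: cc_sym)

lemma ck_hX: "cmod (ck j k * f k) \<le> V0 (j - k) * cmod (hX f k)"
proof -
  have "cmod (ck j k * f k) = \<bar>cc j k\<bar> * cmod (f k)" by (simp add: norm_mult cmod_ck)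
  also have "\<dots> \<le> (V0 (j - k) * (1 + real_of_int \<bar>k\<bar>)) * cmod (f k)"
    by (intro mult_right_mono cc_bd) simp
  also have "\<dots> = V0 (j - k) * cmod (hX f k)"
    unfolding hX_cmod by (simp add: norm_mult algebra_simps)
  finally show ?thesis .
qed

lemma ck_row:
  assumes "l2 u"
  shows "cmod (ck j k * u k) \<le> ((1 + real_of_int \<bar>j\<bar>) * V0 (j - k)) * cmod (u k)"
proof -
  have "cmod (ck j k * u k) = \<bar>cc j k\<bar> * cmod (u k)" by (simp add: norm_mult cmod_ck)
  also have "\<dots> \<le> (V0 (j - k) * (1 + real_of_int \<bar>j\<bar>)) * cmod (u k)"
    by (intro mult_right_mono cc_bd') simp
  finally show ?thesis by (simp add: mult.commute)
qed

lemma V0j_kern: "kern (\<lambda>n. (1 + real_of_int \<bar>j\<bar>) * V0 n)"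
  unfolding V0_def using Lt_pos
  by (simp only: mult.assoc[symmetric]) (intro g_kern, simp)

lemma ck_summable: assumes "l2 u" shows "(\<lambda>k. ck j k * u k) summable_on UNIV"
  by (rule row_bound(1)[OF V0j_kern[of j] assms]) (rule ck_row[OF assms])

lemma ck_summable_X: "f \<in> domX \<Longrightarrow> (\<lambda>k. ck j k * f k) summable_on UNIV"
  by (rule ck_summable, rule domX_l2)

lemma A_pt: "f \<in> domX \<Longrightarrow> cmod (kop ck f j) \<le> convsum V0 (hX f) j"
  unfolding kop_def using row_bound(2)[OF V0_kern hX_l2 ck_hX] by blast

lemma A_l2: "f \<in> domX \<Longrightarrow> l2 (kop ck f)"
  using conv_dom(1)[OF V0_kern hX_l2 A_pt] by blast

lemma Sym:
  assumes phi: "\<phi> \<in> domX" and u: "l2 u"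
  shows "l2inner (kop ck \<phi>) u = l2inner \<phi> (kop ck u)"
proof -
  let ?F = "\<lambda>k j. cnj (ck k j * \<phi> j) * u k"
  have P: "(\<lambda>(k, j). ?F k j) summable_on UNIV \<times> UNIV"
  proof (rule Bil[OF V0_kern hX_l2[OF phi] u])
    fix k j show "cmod (?F k j) \<le> V0 (k - j) * cmod (hX \<phi> j) * cmod (u k)"
      using ck_hX[of k j \<phi>] by (simp add: norm_mult mult_right_mono)
  qed
  have "l2inner (kop ck \<phi>) u = infsum (\<lambda>k. infsum (\<lambda>j. ?F k j) UNIV) UNIV"
    unfolding l2inner_def kop_def by (simp only: infsum_cnj[symmetric] infsum_cmult_left')
  also have "\<dots> = infsum (\<lambda>j. infsum (\<lambda>k. ?F k j) UNIV) UNIV"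
    by (rule infsum_swap_banach[OF P])
  also have "\<dots> = infsum (\<lambda>j. cnj (\<phi> j) * infsum (\<lambda>k. ck j k * u k) UNIV) UNIV"
  proof (rule infsum_cong)
    fix j
    have e: "\<And>k. ?F k j = cnj (\<phi> j) * (ck j k * u k)"
      unfolding complex_cnj_mult cnj_ck by (simp only: mult_ac)
    show "infsum (\<lambda>k. ?F k j) UNIV = cnj (\<phi> j) * infsum (\<lambda>k. ck j k * u k) UNIV"
      by (simp only: e infsum_cmult_right')
  qed
  also have "\<dots> = l2inner \<phi> (kop ck u)" unfolding l2inner_def kop_def ..
  finally show ?thesis .
qed

end

context stp begin

lemma D_dom: "cmod (Dop \<gamma> f k) \<le> cmod (complex_of_real G * f k)"
  unfolding Dop_def using G[of k] G0 by (simp add: norm_mult mult_right_mono)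

lemma D_l2: "l2 f \<Longrightarrow> l2 (Dop \<gamma> f)"
  by (rule l2_dom[OF l2_scale D_dom])

lemma D_norm: assumes f: "l2 f" shows "l2norm (Dop \<gamma> f) \<le> G * l2norm f"
proof -
  have "l2norm (Dop \<gamma> f) \<le> l2norm (\<lambda>k. complex_of_real G * f k)"
    by (rule l2norm_mono[OF l2_scale[OF f]]) (rule D_dom)
  also have "\<dots> = G * l2norm f" using l2norm_scale[OF f, of "complex_of_real G"] G0 by simp
  finally show ?thesis .
qed

lemma D_bounded: "bounded_op (Dop \<gamma>)"
  unfolding bounded_op_def
proof (intro conjI allI impI)
  fix f g c show "Dop \<gamma> (\<lambda>k. f k + c * g k) = (\<lambda>k. Dop \<gamma> f k + c * Dop \<gamma> g k)"
    unfolding Dop_def by (simp add: algebra_simps)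
qed (use D_l2 D_norm in blast)+

lemma D_domX: "\<psi> \<in> domX \<Longrightarrow> Dop \<gamma> \<psi> \<in> domX"
proof -
  assume "\<psi> \<in> domX"
  hence p: "l2 \<psi>" "l2 (Xop \<psi>)" by (auto simp: domX_def)
  have "Xop (Dop \<gamma> \<psi>) = Dop \<gamma> (Xop \<psi>)" unfolding Xop_def Dop_def by (simp add: algebra_simps)
  thus ?thesis unfolding domX_def using D_l2[OF p(1)] D_l2[OF p(2)] by simp
qed

lemma K_kdom: "kdom Vk kap"
  unfolding kdom_def using Vk_kern kap_bd by blast

lemma K_bounded: "bounded_op (kop kap)"
  by (rule kop_bounded(1)[OF K_kdom])

lemma K_norm: "l2 f \<Longrightarrow> l2norm (kop kap f) \<le> infsum Vk UNIV * l2norm f"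
  by (rule kop_bounded(2)[OF K_kdom])

lemma K_l2: "l2 f \<Longrightarrow> l2 (kop kap f)"
  using K_bounded unfolding bounded_op_def by blast

lemma K2_kdom: "kdom V2 kap2"
  unfolding kdom_def using V2_kern kap2_bd by blast

lemma K_domX:
  assumes psi: "\<psi> \<in> domX"
  shows "kop kap \<psi> \<in> domX"
proof -
  have p: "l2 \<psi>" using psi by (simp add: domX_def)
  have pt: "cmod (Xop (kop kap \<psi>) j) \<le> convsum VkX (hX \<psi>) j" for j
  proof -
    have "Xop (kop kap \<psi>) j = infsum (\<lambda>k. of_int j * (kap j k * \<psi> k)) UNIV"
      unfolding Xop_def kop_def by (simp only: infsum_cmult_right')
    also have "cmod \<dots> \<le> convsum VkX (hX \<psi>) j"
    proof (rule row_bound(2)[OF VkX_kern hX_l2[OF psi]])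
      fix k
      have "cmod (of_int j * (kap j k * \<psi> k)) = (real_of_int \<bar>j\<bar> * cmod (kap j k)) * cmod (\<psi> k)"
        by (simp add: norm_mult)
      also have "\<dots> \<le> (VkX (j - k) * (1 + real_of_int \<bar>k\<bar>)) * cmod (\<psi> k)"
        by (intro mult_right_mono kapX_bd) simp
      also have "\<dots> = VkX (j - k) * cmod (hX \<psi> k)"
        unfolding hX_cmod by (simp add: norm_mult algebra_simps)
      finally show "cmod (of_int j * (kap j k * \<psi> k)) \<le> VkX (j - k) * cmod (hX \<psi> k)" .
    qed
    finally show ?thesis .
  qed
  have "l2 (Xop (kop kap \<psi>))" by (rule conv_dom(1)[OF VkX_kern hX_l2[OF psi] pt])
  thus ?thesis unfolding domX_def using K_l2[OF p] by simp
qed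

lemma id1:
  assumes phi: "\<phi> \<in> domX" and psi: "\<psi> \<in> domX"
  shows "l2inner (kop ck \<phi>) (Dop \<gamma> \<psi>) - l2inner \<phi> (Dop \<gamma> (kop ck \<psi>)) = l2inner \<phi> (kop kap \<psi>)"
proof -
  have p: "l2 \<phi>" "l2 \<psi>" using phi psi by (auto simp: domX_def)
  have l1: "l2 (kop ck (Dop \<gamma> \<psi>))" by (rule A_l2[OF D_domX[OF psi]])
  have l2': "l2 (Dop \<gamma> (kop ck \<psi>))" by (rule D_l2[OF A_l2[OF psi]])
  have pt: "kop ck (Dop \<gamma> \<psi>) j - Dop \<gamma> (kop ck \<psi>) j = kop kap \<psi> j" for j
  proof -
    have "kop ck (Dop \<gamma> \<psi>) j - Dop \<gamma> (kop ck \<psi>) j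
        = infsum (\<lambda>k. ck j k * Dop \<gamma> \<psi> k) UNIV - infsum (\<lambda>k. \<gamma> j * (ck j k * \<psi> k)) UNIV"
      unfolding kop_def Dop_def by (simp only: infsum_cmult_right')
    also have "\<dots> = infsum (\<lambda>k. ck j k * Dop \<gamma> \<psi> k - \<gamma> j * (ck j k * \<psi> k)) UNIV"
      by (rule infsum_diff'[symmetric]) (intro ck_summable summable_on_cmult_right D_l2 p)+
    also have "\<dots> = kop kap \<psi> j" unfolding kop_def kap_def Dop_def
      by (rule infsum_cong) (simp add: algebra_simps)
    finally show ?thesis .
  qed
  have "l2inner (kop ck \<phi>) (Dop \<gamma> \<psi>) - l2inner \<phi> (Dop \<gamma> (kop ck \<psi>))
      = l2inner \<phi> (kop ck (Dop \<gamma> \<psi>)) - l2inner \<phi> (Dop \<gamma> (kop ck \<psi>))"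
    using Sym[OF phi D_l2[OF p(2)]] by simp
  also have "\<dots> = l2inner \<phi> (\<lambda>j. kop ck (Dop \<gamma> \<psi>) j - Dop \<gamma> (kop ck \<psi>) j)"
    by (rule l2inner_diff_right[symmetric, OF p(1) l1 l2'])
  also have "\<dots> = l2inner \<phi> (kop kap \<psi>)" by (simp only: pt)
  finally show ?thesis .
qed

lemma id2:
  assumes phi: "\<phi> \<in> domX" and psi: "\<psi> \<in> domX"
  shows "cmod (l2inner (kop ck \<phi>) (kop kap \<psi>) - l2inner \<phi> (kop kap (kop ck \<psi>)))
         \<le> infsum V2 UNIV * l2norm \<phi> * l2norm \<psi>"
proof -
  have p: "l2 \<phi>" "l2 \<psi>" using phi psi by (auto simp: domX_def)
  have l1: "l2 (kop ck (kop kap \<psi>))" by (rule A_l2[OF K_domX[OF psi]])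
  have l2': "l2 (kop kap (kop ck \<psi>))" by (rule K_l2[OF A_l2[OF psi]])
  have pt: "kop ck (kop kap \<psi>) j - kop kap (kop ck \<psi>) j = kop kap2 \<psi> j" for j
  proof -
    let ?A = "\<lambda>k l. ck j k * (kap k l * \<psi> l)"
    let ?B = "\<lambda>k l. kap j k * (ck k l * \<psi> l)"
    have SA: "(\<lambda>l. ?A k l) summable_on UNIV" for k
      by (rule summable_on_cmult_right, rule kop_summable[OF K_kdom p(2)])
    have SB: "(\<lambda>l. ?B k l) summable_on UNIV" for k
      by (rule summable_on_cmult_right, rule ck_summable[OF p(2)])
    have OA: "(\<lambda>k. infsum (?A k) UNIV) summable_on UNIV"
      using ck_summable[OF K_l2[OF p(2)], of j] unfolding kop_def by (simp only: infsum_cmult_right')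
    have OB: "(\<lambda>k. infsum (?B k) UNIV) summable_on UNIV"
      using kop_summable[OF K_kdom A_l2[OF psi], of j] unfolding kop_def by (simp only: infsum_cmult_right')
    have PA: "(\<lambda>(k, l). ?A k l) summable_on UNIV \<times> UNIV"
    proof (rule Tri[OF V0j_kern[of j] Vk_kern p(2), of 1])
      fix k l
      have "cmod (?A k l) = cmod (ck j k) * cmod (kap k l) * cmod (\<psi> l)" by (simp add: norm_mult)
      also have "\<dots> \<le> ((1 + real_of_int \<bar>j\<bar>) * V0 (j - k)) * Vk (k - l) * cmod (\<psi> l)"
        unfolding cmod_ck
        by (intro mult_right_mono mm kap_bd) (use cc_bd'[of j k] in \<open>auto simp: mult.commute\<close>)
      finally show "cmod (?A k l) \<le> 1 * ((1 + real_of_int \<bar>j\<bar>) * V0 (j - k)) * Vk (k - l) * cmod (\<psi> l)"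
        by simp
    qed simp
    have PB: "(\<lambda>(k, l). ?B k l) summable_on UNIV \<times> UNIV"
    proof (rule Tri[OF Vk_kern V0_kern hX_l2[OF psi], of 1])
      fix k l
      have bb: "\<bar>cc k l\<bar> * cmod (\<psi> l) \<le> V0 (k - l) * cmod (hX \<psi> l)"
      proof -
        have "\<bar>cc k l\<bar> * cmod (\<psi> l) \<le> (V0 (k - l) * (1 + real_of_int \<bar>l\<bar>)) * cmod (\<psi> l)"
          by (intro mult_right_mono cc_bd) simp
        also have "\<dots> = V0 (k - l) * cmod (hX \<psi> l)"
          unfolding hX_cmod by (simp add: norm_mult algebra_simps)
        finally show ?thesis .
      qed
      have "cmod (?B k l) = cmod (kap j k) * (\<bar>cc k l\<bar> * cmod (\<psi> l))" by (simp add: norm_mult cmod_ck)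
      also have "\<dots> \<le> Vk (j - k) * (V0 (k - l) * cmod (hX \<psi> l))"
        by (intro mm kap_bd bb) auto
      finally show "cmod (?B k l) \<le> 1 * Vk (j - k) * V0 (k - l) * cmod (hX \<psi> l)" by (simp add: mult.assoc)
    qed simp
    have PAB: "(\<lambda>(k, l). ?A k l - ?B k l) summable_on UNIV \<times> UNIV"
    proof -
      have "(\<lambda>x. (case x of (k, l) \<Rightarrow> ?A k l) - (case x of (k, l) \<Rightarrow> ?B k l)) summable_on UNIV \<times> UNIV"
        by (rule summable_on_diff'[OF PA PB])
      moreover have "(\<lambda>x. (case x of (k, l) \<Rightarrow> ?A k l) - (case x of (k, l) \<Rightarrow> ?B k l)) = (\<lambda>(k, l). ?A k l - ?B k l)"
        by (auto simp: fun_eq_iff)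
      ultimately show ?thesis by simp
    qed
    have "kop ck (kop kap \<psi>) j - kop kap (kop ck \<psi>) j
        = infsum (\<lambda>k. infsum (?A k) UNIV) UNIV - infsum (\<lambda>k. infsum (?B k) UNIV) UNIV"
      unfolding kop_def by (simp only: infsum_cmult_right')
    also have "\<dots> = infsum (\<lambda>k. infsum (?A k) UNIV - infsum (?B k) UNIV) UNIV"
      by (rule infsum_diff'[symmetric, OF OA OB])
    also have "\<dots> = infsum (\<lambda>k. infsum (\<lambda>l. ?A k l - ?B k l) UNIV) UNIV"
      by (rule infsum_cong) (rule infsum_diff'[symmetric, OF SA SB])
    also have "\<dots> = infsum (\<lambda>l. infsum (\<lambda>k. ?A k l - ?B k l) UNIV) UNIV"
      by (rule infsum_swap_banach[OF PAB])
    also have "\<dots> = infsum (\<lambda>l. kap2 j l * \<psi> l) UNIV"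
    proof (rule infsum_cong)
      fix l
      have "\<And>k. ?A k l - ?B k l = (ck j k * kap k l - kap j k * ck k l) * \<psi> l"
        by (simp add: algebra_simps)
      thus "infsum (\<lambda>k. ?A k l - ?B k l) UNIV = kap2 j l * \<psi> l"
        unfolding kap2_def by (simp only: infsum_cmult_left')
    qed
    also have "\<dots> = kop kap2 \<psi> j" unfolding kop_def ..
    finally show ?thesis .
  qed
  have "l2inner (kop ck \<phi>) (kop kap \<psi>) - l2inner \<phi> (kop kap (kop ck \<psi>))
      = l2inner \<phi> (kop ck (kop kap \<psi>)) - l2inner \<phi> (kop kap (kop ck \<psi>))"
    using Sym[OF phi K_l2[OF p(2)]] by simp
  also have "\<dots> = l2inner \<phi> (\<lambda>j. kop ck (kop kap \<psi>) j - kop kap (kop ck \<psi>) j)"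
    by (rule l2inner_diff_right[symmetric, OF p(1) l1 l2'])
  also have "\<dots> = l2inner \<phi> (kop kap2 \<psi>)" by (simp only: pt)
  finally have e: "l2inner (kop ck \<phi>) (kop kap \<psi>) - l2inner \<phi> (kop kap (kop ck \<psi>)) = l2inner \<phi> (kop kap2 \<psi>)" .
  have l3: "l2 (kop kap2 \<psi>)" using kop_bounded(1)[OF K2_kdom] p(2) unfolding bounded_op_def by blast
  have "cmod (l2inner \<phi> (kop kap2 \<psi>)) \<le> l2norm \<phi> * l2norm (kop kap2 \<psi>)"
    by (rule l2inner_bound[OF p(1) l3])
  also have "\<dots> \<le> l2norm \<phi> * (infsum V2 UNIV * l2norm \<psi>)"
    by (intro mult_left_mono kop_bounded(2)[OF K2_kdom p(2)] l2norm_nonneg)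
  finally show ?thesis unfolding e by (simp add: mult_ac)
qed

end

context stp begin

lemma graph_eq:
  assumes fg: "(f, g0) \<in> graphA a"
  shows "g0 = kop ck f"
proof -
  obtain \<phi> where phi: "\<And>n. \<phi> n \<in> domX"
    and c1: "(\<lambda>n. l2norm (\<lambda>k. \<phi> n k - f k)) \<longlonglongrightarrow> 0"
    and c2: "(\<lambda>n. l2norm (\<lambda>k. A0 a (\<phi> n) k - g0 k)) \<longlonglongrightarrow> 0"
    and f: "l2 f" and g: "l2 g0"
    using fg unfolding graphA_def by blast
  show ?thesis
  proof
    fix k
    have L1: "(\<lambda>n. kop ck (\<phi> n) k) \<longlonglongrightarrow> g0 k"
    proof -
      have "(\<lambda>n. kop ck (\<phi> n) k - g0 k) \<longlonglongrightarrow> 0"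
      proof (rule Lim_null_comparison[OF _ c2])
        show "\<forall>\<^sub>F n in sequentially. cmod (kop ck (\<phi> n) k - g0 k) \<le> l2norm (\<lambda>k. A0 a (\<phi> n) k - g0 k)"
          unfolding A0_eq
          by (intro always_eventually allI l2_pt[of "\<lambda>k. kop ck (\<phi> n) k - g0 k" k for n, simplified]
              l2_diff A_l2 phi g)
      qed
      thus ?thesis by (simp add: LIM_zero_iff)
    qed
    have L2: "(\<lambda>n. kop ck (\<phi> n) k) \<longlonglongrightarrow> kop ck f k"
    proof -
      define S where "S = infsum (\<lambda>n. (1 + real_of_int \<bar>k\<bar>) * V0 n) UNIV"
      have "(\<lambda>n. kop ck (\<phi> n) k - kop ck f k) \<longlonglongrightarrow> 0"
      proof (rule Lim_null_comparison)
        show "(\<lambda>n. S * l2norm (\<lambda>k. \<phi> n k - f k)) \<longlonglongrightarrow> 0"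
          using tendsto_mult[OF tendsto_const c1, of S] by simp
        show "\<forall>\<^sub>F n in sequentially. cmod (kop ck (\<phi> n) k - kop ck f k) \<le> S * l2norm (\<lambda>k. \<phi> n k - f k)"
        proof (rule always_eventually, rule allI)
          fix n
          have pn: "l2 (\<phi> n)" using phi[of n] by (simp add: domX_def)
          have d: "l2 (\<lambda>j. \<phi> n j - f j)" by (rule l2_diff[OF pn f])
          have "kop ck (\<phi> n) k - kop ck f k = infsum (\<lambda>j. ck k j * \<phi> n j - ck k j * f j) UNIV"
            unfolding kop_def by (rule infsum_diff'[symmetric]) (rule ck_summable, fact)+
          also have "\<dots> = infsum (\<lambda>j. ck k j * (\<phi> n j - f j)) UNIV"
            by (simp add: right_diff_distrib)
          also have "cmod \<dots> \<le> convsum (\<lambda>n. (1 + real_of_int \<bar>k\<bar>) * V0 n) (\<lambda>j. \<phi> n j - f j) k"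
            by (rule row_bound(2)[OF V0j_kern d]) (rule ck_row[OF d])
          also have "\<dots> \<le> S * l2norm (\<lambda>j. \<phi> n j - f j)" unfolding S_def
            by (rule convsum_le[OF V0j_kern d])
          finally show "cmod (kop ck (\<phi> n) k - kop ck f k) \<le> S * l2norm (\<lambda>k. \<phi> n k - f k)" .
        qed
      qed
      thus ?thesis by (simp add: LIM_zero_iff)
    qed
    show "g0 k = kop ck f k" using LIMSEQ_unique[OF L1 L2] .
  qed
qed

lemma Aop_eq:
  assumes "f \<in> domA a"
  shows "(f, kop ck f) \<in> graphA a" and "Aop a f = kop ck f"
proof -
  obtain g0 where fg: "(f, g0) \<in> graphA a" using assms unfolding domA_def by blast
  thus "(f, kop ck f) \<in> graphA a" using graph_eq[OF fg] by simp
  thus "Aop a f = kop ck f" unfolding Aop_def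
    by (intro the_equality) (auto intro: graph_eq)
qed

lemma domA_l2: "f \<in> domA a \<Longrightarrow> l2 f"
  using Aop_eq(1) unfolding graphA_def by blast

lemma approx:
  assumes "f \<in> domA a"
  obtains \<phi> where "\<And>n. \<phi> n \<in> domX" "l2conv \<phi> f" "l2conv (\<lambda>n. kop ck (\<phi> n)) (kop ck f)"
proof -
  have "(f, kop ck f) \<in> graphA a" by (rule Aop_eq(1)[OF assms])
  then obtain \<phi> where phi: "\<And>n. \<phi> n \<in> domX"
    and c1: "(\<lambda>n. l2norm (\<lambda>k. \<phi> n k - f k)) \<longlonglongrightarrow> 0"
    and c2: "(\<lambda>n. l2norm (\<lambda>k. A0 a (\<phi> n) k - kop ck f k)) \<longlonglongrightarrow> 0"
    and f: "l2 f" and g: "l2 (kop ck f)"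
    unfolding graphA_def by blast
  show ?thesis
  proof (rule that[OF phi])
    show "l2conv \<phi> f" unfolding l2conv_def using phi f c1 by (auto simp: domX_def)
    show "l2conv (\<lambda>n. kop ck (\<phi> n)) (kop ck f)" unfolding l2conv_def
      using phi g c2 A_l2 by (auto simp: A0_eq)
  qed
qed

lemma ad1:
  assumes phi: "\<phi> \<in> domA a" and psi: "\<psi> \<in> domA a"
  shows "l2inner (Aop a \<phi>) (Dop \<gamma> \<psi>) - l2inner \<phi> (Dop \<gamma> (Aop a \<psi>)) = l2inner \<phi> (kop kap \<psi>)"
proof -
  obtain p where p: "\<And>n. p n \<in> domX" "l2conv p \<phi>" "l2conv (\<lambda>n. kop ck (p n)) (kop ck \<phi>)"
    using approx[OF phi] by blast
  obtain q where q: "\<And>n. q n \<in> domX" "l2conv q \<psi>" "l2conv (\<lambda>n. kop ck (q n)) (kop ck \<psi>)"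
    using approx[OF psi] by blast
  have T1: "(\<lambda>n. l2inner (kop ck (p n)) (Dop \<gamma> (q n)) - l2inner (p n) (Dop \<gamma> (kop ck (q n))))
      \<longlonglongrightarrow> l2inner (kop ck \<phi>) (Dop \<gamma> \<psi>) - l2inner \<phi> (Dop \<gamma> (kop ck \<psi>))"
    by (intro tendsto_diff l2inner_tendsto p q bounded_op_conv[OF D_bounded])
  have T2: "(\<lambda>n. l2inner (p n) (kop kap (q n))) \<longlonglongrightarrow> l2inner \<phi> (kop kap \<psi>)"
    by (intro l2inner_tendsto p bounded_op_conv[OF K_bounded] q)
  have "(\<lambda>n. l2inner (kop ck (p n)) (Dop \<gamma> (q n)) - l2inner (p n) (Dop \<gamma> (kop ck (q n))))
      = (\<lambda>n. l2inner (p n) (kop kap (q n)))"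
    using id1[OF p(1) q(1)] by simp
  hence "l2inner (kop ck \<phi>) (Dop \<gamma> \<psi>) - l2inner \<phi> (Dop \<gamma> (kop ck \<psi>)) = l2inner \<phi> (kop kap \<psi>)"
    using LIMSEQ_unique[OF T1] T2 by simp
  thus ?thesis using Aop_eq(2)[OF phi] Aop_eq(2)[OF psi] by simp
qed

lemma ad2:
  assumes phi: "\<phi> \<in> domA a" and psi: "\<psi> \<in> domA a"
  shows "cmod (l2inner (Aop a \<phi>) (kop kap \<psi>) - l2inner \<phi> (kop kap (Aop a \<psi>)))
         \<le> infsum V2 UNIV * l2norm \<phi> * l2norm \<psi>"
proof -
  obtain p where p: "\<And>n. p n \<in> domX" "l2conv p \<phi>" "l2conv (\<lambda>n. kop ck (p n)) (kop ck \<phi>)"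
    using approx[OF phi] by blast
  obtain q where q: "\<And>n. q n \<in> domX" "l2conv q \<psi>" "l2conv (\<lambda>n. kop ck (q n)) (kop ck \<psi>)"
    using approx[OF psi] by blast
  have T1: "(\<lambda>n. cmod (l2inner (kop ck (p n)) (kop kap (q n)) - l2inner (p n) (kop kap (kop ck (q n)))))
      \<longlonglongrightarrow> cmod (l2inner (kop ck \<phi>) (kop kap \<psi>) - l2inner \<phi> (kop kap (kop ck \<psi>)))"
    by (intro tendsto_norm tendsto_diff l2inner_tendsto p q bounded_op_conv[OF K_bounded])
  have T2: "(\<lambda>n. infsum V2 UNIV * l2norm (p n) * l2norm (q n)) \<longlonglongrightarrow> infsum V2 UNIV * l2norm \<phi> * l2norm \<psi>"
    by (intro tendsto_mult tendsto_const l2norm_tendsto p q)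
  have "cmod (l2inner (kop ck \<phi>) (kop kap \<psi>) - l2inner \<phi> (kop kap (kop ck \<psi>)))
      \<le> infsum V2 UNIV * l2norm \<phi> * l2norm \<psi>"
    by (rule LIMSEQ_le[OF T1 T2]) (use id2[OF p(1) q(1)] in blast)
  thus ?thesis using Aop_eq(2)[OF phi] Aop_eq(2)[OF psi] by simp
qed

lemma main_C2: "C2 (Aop a) (domA a) (Dop \<gamma>)"
proof -
  have c1: "C1 (Aop a) (domA a) (Dop \<gamma>)"
    unfolding C1_def
  proof (intro conjI D_bounded exI ballI)
    fix \<phi> \<psi> assume phi: "\<phi> \<in> domA a" and psi: "\<psi> \<in> domA a"
    have l: "l2 \<phi>" "l2 \<psi>" using domA_l2 phi psi by auto
    have "cmod (l2inner (Aop a \<phi>) (Dop \<gamma> \<psi>) - l2inner \<phi> (Dop \<gamma> (Aop a \<psi>)))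
        = cmod (l2inner \<phi> (kop kap \<psi>))" using ad1[OF phi psi] by simp
    also have "\<dots> \<le> l2norm \<phi> * l2norm (kop kap \<psi>)" by (rule l2inner_bound[OF l(1) K_l2[OF l(2)]])
    also have "\<dots> \<le> l2norm \<phi> * (infsum Vk UNIV * l2norm \<psi>)"
      by (intro mult_left_mono K_norm l(2) l2norm_nonneg)
    finally show "cmod (l2inner (Aop a \<phi>) (Dop \<gamma> \<psi>) - l2inner \<phi> (Dop \<gamma> (Aop a \<psi>)))
        \<le> infsum Vk UNIV * l2norm \<phi> * l2norm \<psi>" by (simp add: mult_ac)
  qed
  have ad: "is_adA (Aop a) (domA a) (Dop \<gamma>) (kop kap)"
    unfolding is_adA_def using K_bounded ad1 by simp
  have c1k: "C1 (Aop a) (domA a) (kop kap)"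
    unfolding C1_def using K_bounded ad2 by blast
  show ?thesis unfolding C2_def using c1 ad c1k by blast
qed

end

lemma ereal_sum_fin:
  fixes x y :: ereal
  assumes "x \<ge> 0" "y \<ge> 0" "x + y < \<infinity>"
  shows "x < \<infinity>" and "y < \<infinity>"
proof -
  show "x < \<infinity>" using assms by (cases x; cases y) auto
  show "y < \<infinity>" using assms by (cases x; cases y) auto
qed

lemma sup_fin:
  fixes h :: "int \<Rightarrow> real"
  assumes "(SUP k. ereal (h k)) < \<infinity>"
  shows "\<exists>C. \<forall>k. h k \<le> C"
proof -
  define S where "S = (SUP k. ereal (h k))"
  have up: "ereal (h k) \<le> S" for k unfolding S_def by (rule SUP_upper) simp
  show ?thesis
  proof (cases S)
    case (real r) thus ?thesis using up by auto
  next
    case PInf thus ?thesis using assms S_def by simp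
  next
    case MInf thus ?thesis using up[of 0] by simp
  qed
qed

lemma sup_nonneg: fixes h :: "int \<Rightarrow> complex" shows "(SUP k. ereal (cmod (h k))) \<ge> (0::ereal)"
proof -
  have "ereal (cmod (h 0)) \<le> (SUP k. ereal (cmod (h k)))" by (rule SUP_upper) simp
  moreover have "(0::ereal) \<le> ereal (cmod (h 0))" by simp
  ultimately show ?thesis by (rule order.trans[rotated])
qed

theorem mainTheorem9:
  fixes a :: real and \<gamma> :: "int \<Rightarrow> complex"
  assumes "a > 1"
    and "bounded (range \<gamma>)"
    and "q 2 \<gamma> < \<infinity>"
  shows "C2 (Aop a) (domA a) (Dop \<gamma>)"
proof -
  obtain G where G: "\<And>k. cmod (\<gamma> k) \<le> G" using assms(2) unfolding bounded_iff by auto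
  define S1 where "S1 = (SUP k. ereal (cmod (of_int k ^ Suc 0 * (Delta ^^ Suc 0) \<gamma> k)))"
  define S2 where "S2 = (SUP k. ereal (cmod (of_int k ^ Suc (Suc 0) * (Delta ^^ Suc (Suc 0)) \<gamma> k)))"
  have q2: "q 2 \<gamma> = (q 0 \<gamma> + S1) + S2"
    unfolding S1_def S2_def numeral_2_eq_2 by simp
  have "q 0 \<gamma> \<ge> 0" by (simp add: sup_nonneg)
  moreover have "S1 \<ge> 0" "S2 \<ge> 0" unfolding S1_def S2_def by (rule sup_nonneg)+
  ultimately have h: "q 0 \<gamma> \<ge> 0" "S1 \<ge> 0" "S2 \<ge> 0" by auto
  have s: "(q 0 \<gamma> + S1) + S2 < \<infinity>" using assms(3) q2 by simp
  have s2: "S2 < \<infinity>" by (rule ereal_sum_fin(2)[OF add_nonneg_nonneg[OF h(1) h(2)] h(3) s])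
  have s01: "q 0 \<gamma> + S1 < \<infinity>" by (rule ereal_sum_fin(1)[OF add_nonneg_nonneg[OF h(1) h(2)] h(3) s])
  have s1: "S1 < \<infinity>" by (rule ereal_sum_fin(2)[OF h(1) h(2) s01])
  obtain B1 where B1: "\<And>k. cmod (of_int k ^ Suc 0 * (Delta ^^ Suc 0) \<gamma> k) \<le> B1"
    using sup_fin[OF s1[unfolded S1_def]] by blast
  obtain B2 where B2: "\<And>k. cmod (of_int k ^ Suc (Suc 0) * (Delta ^^ Suc (Suc 0)) \<gamma> k) \<le> B2"
    using sup_fin[OF s2[unfolded S2_def]] by blast
  interpret stp \<gamma> G B1 B2 a
  proof unfold_locales
    show "\<And>k. cmod (\<gamma> k) \<le> G" by (rule G)
    show "\<And>k. cmod (of_int k * Delta \<gamma> k) \<le> B1" using B1 by simp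
    show "\<And>k. cmod ((of_int k)^2 * Delta (Delta \<gamma>) k) \<le> B2" using B2 by (simp add: numeral_2_eq_2)
    show "a > 1" by (rule assms(1))
  qed
  show ?thesis by (rule main_C2)
qed

end
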